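(* Let $\mu$ be an unconditional log-concave measure on $\mathbb{R}^n$, and let $K \subset \mathbb{R}^n$ be a symmetric convex body. If $u$ is one of the vectors $e_1,\dots,e_n$ of the standard basis, then $$\mu(K)\,\mu(K^o) \leq \mu(S_u K)\,\mu((S_u K)^o).$$
   Context: A convex body is a compact convex set with non-empty interior; it is symmetric if $K=-K$. The polar body is $K^o := \{y : \langle x,y\rangle \leq 1 \ \forall x \in K\}$. A measure $\mu$ on $\mathbb{R}^n$ is log-concave if it has a density $f_\mu$ with $\log f_\mu$ concave (values in $\mathbb{R}\cup\{-\infty\}$), and unconditional if $f_\mu(\varepsilon_1x_1,\dots,\varepsilon_nx_n) = f_\mu(x)$ for all $x$ and all $\varepsilon \in \{\pm1\}^n$. For a unit vector $u$, the Steiner symmetral $S_uK$ is defined fiberwise: for every $y \in u^\perp$, letting $L_y := (L-y)\cap \mathbb{R}u$ denote the translated one-dimensional fiber of a set $L$ over $y$, we set $(S_uK)_y = \frac{K_y + (-K_y)}{2}$, i.e. $S_uK = \bigcup_{y\in u^\perp}\big(y + \tfrac{K_y + (-K_y)}{2}\big)$. *)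

theory Defs
  imports "HOL-Analysis.Analysis"
begin

definition convex_body :: "'a::euclidean_space set \<Rightarrow> bool" where
  "convex_body K \<longleftrightarrow> compact K \<and> convex K \<and> interior K \<noteq> {}"

definition symmetric_set :: "'a::real_vector set \<Rightarrow> bool" where
  "symmetric_set K \<longleftrightarrow> uminus ` K = K"

definition polar :: "'a::real_inner set \<Rightarrow> 'a set" where
  "polar K = {y. \<forall>x\<in>K. inner x y \<le> 1}"

text \<open>log f concave with values in R \<union> {-\<infinity>}, i.e. f \<ge> 0 and
  f((1-t)x+ty) \<ge> f(x)^(1-t) f(y)^t for 0<t<1.\<close>
definition log_concave_fun :: "('a::real_vector \<Rightarrow> real) \<Rightarrow> bool" where
  "log_concave_fun f \<longleftrightarrow> (\<forall>x. 0 \<le> f x) \<and>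
     (\<forall>x y t. 0 < t \<and> t < 1 \<longrightarrow>
        f x powr (1 - t) * f y powr t \<le> f ((1 - t) *\<^sub>R x + t *\<^sub>R y))"

definition log_concave_measure :: "'a::euclidean_space measure \<Rightarrow> bool" where
  "log_concave_measure \<mu> \<longleftrightarrow> (\<exists>f. f \<in> borel_measurable lebesgue \<and> log_concave_fun f \<and>
      \<mu> = density lebesgue (\<lambda>x. ennreal (f x)))"

definition unconditional_measure :: "(real^'n) measure \<Rightarrow> bool" where
  "unconditional_measure \<mu> \<longleftrightarrow> (\<exists>f. f \<in> borel_measurable lebesgue \<and> log_concave_fun f \<and>
      \<mu> = density lebesgue (\<lambda>x. ennreal (f x)) \<and>
      (\<forall>x (\<epsilon>::'n \<Rightarrow> real). (\<forall>j. \<epsilon> j \<in> {-1, 1}) \<longrightarrow> f (\<chi> j. \<epsilon> j * x $ j) = f x))"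

definition fiber :: "'a::real_inner set \<Rightarrow> 'a \<Rightarrow> 'a \<Rightarrow> real set" where
  "fiber L u y = {t. y + t *\<^sub>R u \<in> L}"

definition steiner_symmetral :: "'a::real_inner \<Rightarrow> 'a set \<Rightarrow> 'a set" where
  "steiner_symmetral u K =
     (\<Union>y\<in>{y. inner y u = 0}. (\<lambda>c. y + c *\<^sub>R u) `
        {(s + r) / 2 | s r. s \<in> fiber K u y \<and> r \<in> uminus ` fiber K u y})"

end

theory Submission
  imports Defs
begin

lemma emeasure_half_shift:
  fixes X :: "real set" assumes X: "X \<in> sets borel"
  shows "emeasure lborel X = 2 * emeasure lborel ((\<lambda>x. (x + b)/2) ` X)"
proof -
  have eq: "(\<lambda>x. (x + b)/2) ` X = (\<lambda>x. -b + 2 * x) -` X"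
  proof (rule set_eqI, rule iffI)
    fix z assume "z \<in> (\<lambda>x. (x + b)/2) ` X"
    then obtain x where "x \<in> X" "z = (x + b)/2" by auto
    then have "-b + 2 * z = x" by simp
    with \<open>x \<in> X\<close> show "z \<in> (\<lambda>x. -b + 2 * x) -` X" by simp
  next
    fix z assume "z \<in> (\<lambda>x. -b + 2 * x) -` X"
    then have "-b + 2*z \<in> X" by simp
    moreover have "z = ((-b + 2*z) + b)/2" by simp
    ultimately show "z \<in> (\<lambda>x. (x + b)/2) ` X" by (metis image_eqI)
  qed
  have m: "(\<lambda>x. -b + 2 * x) -` X \<in> sets borel"
    using X by (intro measurable_sets_borel[OF _ X]) auto
  have "emeasure lborel X = emeasure (density (distr lborel borel (\<lambda>x. -b + 2 * x)) (\<lambda>_. ennreal \<bar>2\<bar>)) X"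
    by (subst lborel_real_affine[of 2 "-b", symmetric]) auto
  also have "\<dots> = 2 * emeasure lborel ((\<lambda>x. -b + 2 * x) -` X)"
    using X m by (simp add: emeasure_density emeasure_distr nn_integral_cmult_indicator)
  finally show ?thesis unfolding eq .
qed

lemma bm_compact:
  fixes X Y Z :: "real set"
  assumes "compact X" "compact Y" "X \<noteq> {}" "Y \<noteq> {}"
    and sub: "\<And>x y. x \<in> X \<Longrightarrow> y \<in> Y \<Longrightarrow> (x + y)/2 \<in> Z" and Z: "Z \<in> sets borel"
  shows "emeasure lborel X + emeasure lborel Y \<le> 2 * emeasure lborel Z"
proof -
  define a where "a = Sup X"
  define b where "b = Inf Y"
  have aX: "a \<in> X" unfolding a_def using assms
    by (meson closed_contains_Sup compact_imp_bounded compact_imp_closed bounded_imp_bdd_above)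
  have bY: "b \<in> Y" unfolding b_def using assms
    by (meson closed_contains_Inf compact_imp_bounded compact_imp_closed bounded_imp_bdd_below)
  have xa: "x \<le> a" if "x \<in> X" for x unfolding a_def
    using assms that by (meson cSup_upper compact_imp_bounded bounded_imp_bdd_above)
  have yb: "b \<le> y" if "y \<in> Y" for y unfolding b_def
    using assms that by (meson cInf_lower compact_imp_bounded bounded_imp_bdd_below)
  define m where "m = (a + b)/2"
  define S1 where "S1 = (\<lambda>x. (x + b)/2) ` X"
  define S2 where "S2 = (\<lambda>x. (x + a)/2) ` Y"
  have Xb: "X \<in> sets borel" "Y \<in> sets borel" using assms by (auto intro: borel_compact)
  have S1b: "S1 \<in> sets borel" "S2 \<in> sets borel" unfolding S1_def S2_def
    using assms by (auto intro!: borel_compact compact_continuous_image continuous_intros)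
  have S1Z: "S1 \<subseteq> Z \<inter> {..m}" unfolding S1_def m_def using sub bY xa by auto
  have S2Z: "S2 - {m} \<subseteq> Z \<inter> {m<..}"
  proof
    fix z assume "z \<in> S2 - {m}"
    then obtain y where y: "y \<in> Y" "z = (y + a)/2" "z \<noteq> m" unfolding S2_def by auto
    have A: "(a + y)/2 \<in> Z" using sub[OF aX y(1)] .
    have "b \<le> y" using yb y(1) by auto
    have E: "z = (a + y)/2" using y(2) by simp
    have "z \<noteq> (a+b)/2" using y(3) unfolding m_def .
    then have "m < z" using \<open>b \<le> y\<close> E unfolding m_def by auto
    moreover have "z \<in> Z" by (simp only: E A)
    ultimately show "z \<in> Z \<inter> {m<..}" by auto
  qed
  have "emeasure lborel S2 \<le> emeasure lborel ((S2 - {m}) \<union> {m})"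
    using S1b by (intro emeasure_mono) auto
  also have "\<dots> \<le> emeasure lborel (S2 - {m}) + emeasure lborel {m}"
    using S1b by (intro emeasure_subadditive) auto
  finally have "emeasure lborel S2 \<le> emeasure lborel (S2 - {m})" by simp
  then have e2: "emeasure lborel S2 \<le> emeasure lborel (Z \<inter> {m<..})"
  proof -
    have "emeasure lborel (S2 - {m}) \<le> emeasure lborel (Z \<inter> {m<..})"
      using S2Z Z by (intro emeasure_mono) auto
    then show ?thesis using \<open>emeasure lborel S2 \<le> emeasure lborel (S2 - {m})\<close> by simp
  qed
  have e1: "emeasure lborel S1 \<le> emeasure lborel (Z \<inter> {..m})"
    using S1Z Z by (auto intro: emeasure_mono)
  have "emeasure lborel (Z \<inter> {..m}) + emeasure lborel (Z \<inter> {m<..}) = emeasure lborel ((Z \<inter> {..m}) \<union> (Z \<inter> {m<..}))"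
    using Z by (intro plus_emeasure) auto
  also have "(Z \<inter> {..m}) \<union> (Z \<inter> {m<..}) = Z" by auto
  finally have "emeasure lborel S1 + emeasure lborel S2 \<le> emeasure lborel Z"
    using e1 e2 by (metis add_mono)
  then have "2 * (emeasure lborel S1 + emeasure lborel S2) \<le> 2 * emeasure lborel Z"
    by (intro mult_left_mono) auto
  moreover have "emeasure lborel X = 2 * emeasure lborel S1" "emeasure lborel Y = 2 * emeasure lborel S2"
    unfolding S1_def S2_def using Xb by (auto intro!: emeasure_half_shift)
  ultimately show ?thesis by (simp add: distrib_left)
qed

lemma lborel_inner_compact:
  fixes X :: "real set" assumes X: "X \<in> sets borel"
  shows "emeasure lborel X \<le> (SUP K\<in>{K. K \<subseteq> X \<and> compact K}. emeasure lborel K)"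
proof -
  define M where "M n = density lborel (indicator {-real n..real n})" for n :: nat
  have eM: "emeasure (M n) A = emeasure lborel (A \<inter> {-real n..real n})" if "A \<in> sets borel" for n A
  proof -
    have "emeasure (M n) A = (\<integral>\<^sup>+x. indicator {-real n..real n} x * indicator A x \<partial>lborel)"
      unfolding M_def using that by (simp add: emeasure_density)
    also have "\<dots> = (\<integral>\<^sup>+x. indicator (A \<inter> {-real n..real n}) x \<partial>lborel)"
      by (intro nn_integral_cong) (auto split: split_indicator)
    also have "\<dots> = emeasure lborel (A \<inter> {-real n..real n})" using that by simp
    finally show ?thesis .
  qed
  have "emeasure (M n) X \<le> (SUP K\<in>{K. K \<subseteq> X \<and> compact K}. emeasure lborel K)" for n
  proof -
    have s: "sets (M n) = sets borel" unfolding M_def by simp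
    have f: "emeasure (M n) (space (M n)) \<noteq> \<infinity>"
      using eM[of UNIV n] unfolding M_def by (simp add: emeasure_lborel_Icc_eq)
    have "emeasure (M n) X = (SUP K\<in>{K. K \<subseteq> X \<and> compact K}. emeasure (M n) K)"
      by (rule inner_regular[OF s f X])
    also have "\<dots> \<le> (SUP K\<in>{K. K \<subseteq> X \<and> compact K}. emeasure lborel K)"
    proof (rule SUP_subset_mono[OF order_refl])
      fix K assume "K \<in> {K. K \<subseteq> X \<and> compact K}"
      then have Kb: "K \<in> sets borel" by (auto intro: borel_compact)
      have "emeasure (M n) K = emeasure lborel (K \<inter> {-real n..real n})" by (rule eM[OF Kb])
      also have "\<dots> \<le> emeasure lborel K" using Kb by (intro emeasure_mono) auto
      finally show "emeasure (M n) K \<le> emeasure lborel K" .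
    qed
    finally show ?thesis .
  qed
  moreover have "emeasure lborel X = (SUP n. emeasure (M n) X)"
  proof -
    have "(\<lambda>n. emeasure lborel (X \<inter> {-real n..real n})) \<longlonglongrightarrow> emeasure lborel (\<Union>n. X \<inter> {-real n..real n})"
      using X by (intro Lim_emeasure_incseq) (auto simp: incseq_def)
    moreover have "(\<Union>n. X \<inter> {-real n..real n}) = X"
    proof safe
      fix x assume "x \<in> X"
      obtain n where "\<bar>x\<bar> \<le> real n" using real_arch_simple by blast
      then have "x \<in> X \<inter> {-real n..real n}" using \<open>x\<in>X\<close> by auto
      then show "x \<in> (\<Union>n. X \<inter> {-real n..real n})" by blast
    qed
    ultimately have "(\<lambda>n. emeasure (M n) X) \<longlonglongrightarrow> emeasure lborel X" using eM X by simp
    moreover have "incseq (\<lambda>n. emeasure (M n) X)" using X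
      by (auto simp: incseq_def eM intro!: emeasure_mono)
    ultimately show ?thesis using LIMSEQ_unique LIMSEQ_SUP by blast
  qed
  ultimately show ?thesis by (auto intro: SUP_least)
qed

lemma bm_borel:
  fixes X Y Z :: "real set"
  assumes X: "X \<in> sets borel" and Y: "Y \<in> sets borel" and Z: "Z \<in> sets borel"
    and ne: "X \<noteq> {}" "Y \<noteq> {}"
    and sub: "\<And>x y. x \<in> X \<Longrightarrow> y \<in> Y \<Longrightarrow> (x + y)/2 \<in> Z"
  shows "emeasure lborel X + emeasure lborel Y \<le> 2 * emeasure lborel Z"
proof -
  obtain x0 y0 where x0: "x0 \<in> X" and y0: "y0 \<in> Y" using ne by auto
  have key: "emeasure lborel X' + emeasure lborel Y' \<le> 2 * emeasure lborel Z"
    if "X' \<subseteq> X" "compact X'" "Y' \<subseteq> Y" "compact Y'" for X' Y'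
  proof -
    have "emeasure lborel X' + emeasure lborel Y' \<le> emeasure lborel (insert x0 X') + emeasure lborel (insert y0 Y')"
      using that by (intro add_mono emeasure_mono) (auto intro: borel_compact)
    also have "\<dots> \<le> 2 * emeasure lborel Z"
      using that x0 y0 by (intro bm_compact[OF _ _ _ _ _ Z]) (auto intro: sub)
    finally show ?thesis .
  qed
  let ?C = "\<lambda>X. {K. K \<subseteq> X \<and> compact K}"
  have ne2: "?C X \<noteq> {}" "?C Y \<noteq> {}" by auto
  have "emeasure lborel X' + emeasure lborel Y \<le> 2 * emeasure lborel Z" if "X' \<in> ?C X" for X'
  proof -
    have "emeasure lborel X' + emeasure lborel Y \<le> emeasure lborel X' + (SUP K\<in>?C Y. emeasure lborel K)"
      using lborel_inner_compact[OF Y] by (rule add_left_mono)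
    also have "\<dots> = (SUP K\<in>?C Y. emeasure lborel X' + emeasure lborel K)"
      using ne2 by (simp add: ennreal_SUP_add_right)
    also have "\<dots> \<le> 2 * emeasure lborel Z" using that by (auto intro!: SUP_least key)
    finally show ?thesis .
  qed
  then have "(SUP K\<in>?C X. emeasure lborel K + emeasure lborel Y) \<le> 2 * emeasure lborel Z"
    by (auto intro!: SUP_least)
  then have "(SUP K\<in>?C X. emeasure lborel K) + emeasure lborel Y \<le> 2 * emeasure lborel Z"
    using ne2 by (simp add: ennreal_SUP_add_left)
  then show ?thesis using lborel_inner_compact[OF X] by (meson add_right_mono order_trans)
qed

lemma emeasure_Ici_top: "emeasure lborel {0::real..} = top"
proof (rule ccontr)
  assume "emeasure lborel {0::real..} \<noteq> top"
  then obtain c where c: "emeasure lborel {0::real..} = ennreal c" "0 \<le> c"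
    by (cases "emeasure lborel {0::real..}" rule: ennreal_cases) auto
  have "ennreal (c + 1) = emeasure lborel {0..c+1}" using c by simp
  also have "\<dots> \<le> emeasure lborel {0::real..}" by (intro emeasure_mono) auto
  finally show False using c by (simp add: ennreal_le_iff)
qed

lemma layer_cake:
  fixes f :: "real \<Rightarrow> ennreal" assumes fm[measurable]: "f \<in> borel_measurable borel"
  shows "(\<integral>\<^sup>+x. f x \<partial>lborel) = (\<integral>\<^sup>+t. indicator {0..} t * emeasure lborel {x. ennreal t < f x} \<partial>lborel)"
proof -
  have pt: "f x = (\<integral>\<^sup>+t. indicator {0..} t * indicator {t. ennreal t < f x} t \<partial>lborel)" for x
  proof (cases "f x" rule: ennreal_cases)
    case (real r)
    have "(\<integral>\<^sup>+t. indicator {0..} t * indicator {t. ennreal t < f x} t \<partial>lborel) = (\<integral>\<^sup>+t. indicator {0..<r} t \<partial>lborel)"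
      using real by (intro nn_integral_cong) (auto split: split_indicator simp: ennreal_less_iff)
    also have "\<dots> = ennreal r" using real by simp
    finally show ?thesis using real by simp
  next
    case top
    have "(\<integral>\<^sup>+t. indicator {0..} t * indicator {t. ennreal t < f x} t \<partial>lborel) = (\<integral>\<^sup>+t. indicator {0..} (t::real) \<partial>lborel)"
      using top by simp
    also have "\<dots> = top" using emeasure_Ici_top by simp
    finally show ?thesis using top by simp
  qed
  have "(\<integral>\<^sup>+x. f x \<partial>lborel) = (\<integral>\<^sup>+x. (\<integral>\<^sup>+t. indicator {0..} t * indicator {t. ennreal t < f x} t \<partial>lborel) \<partial>lborel)"
    by (subst pt) rule
  also have "\<dots> = (\<integral>\<^sup>+t. (\<integral>\<^sup>+x. indicator {0..} t * indicator {t. ennreal t < f x} t \<partial>lborel) \<partial>lborel)"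
    by (rule lborel_pair.Fubini'[symmetric]) measurable
  also have "\<dots> = (\<integral>\<^sup>+t. indicator {0..} t * emeasure lborel {x. ennreal t < f x} \<partial>lborel)"
  proof (intro nn_integral_cong)
    fix t :: real
    have "(\<integral>\<^sup>+x. indicator {0..} t * indicator {t. ennreal t < f x} t \<partial>lborel) =
          indicator {0..} t * (\<integral>\<^sup>+x. indicator {x. ennreal t < f x} x \<partial>lborel)"
    proof -
      have "(\<lambda>x. indicator {0..} t * indicator {t. ennreal t < f x} t) = ((\<lambda>x. indicator {0..} t * indicator {x. ennreal t < f x} (x::real)) :: real \<Rightarrow> ennreal)"
        by (auto simp: indicator_def fun_eq_iff)
      then show ?thesis by (simp add: nn_integral_cmult)
    qed
    also have "\<dots> = indicator {0..} t * emeasure lborel {x. ennreal t < f x}"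
      by (subst nn_integral_indicator) auto
    finally show "(\<integral>\<^sup>+x. indicator {0..} t * indicator {t. ennreal t < f x} t \<partial>lborel) =
          indicator {0..} t * emeasure lborel {x. ennreal t < f x}" .
  qed
  finally show ?thesis .
qed

lemma level_measurable:
  fixes f :: "real \<Rightarrow> ennreal" assumes fm[measurable]: "f \<in> borel_measurable borel"
  shows "(\<lambda>t. emeasure lborel {x. ennreal t < f x}) \<in> borel_measurable borel"
proof -
  have "{p \<in> space (lborel \<Otimes>\<^sub>M lborel). ennreal (fst p) < f (snd p)} \<in> sets (lborel \<Otimes>\<^sub>M lborel)"
    by measurable
  then have Q: "{p::real\<times>real. ennreal (fst p) < f (snd p)} \<in> sets (lborel \<Otimes>\<^sub>M lborel)"
    by (simp add: space_pair_measure)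
  have "(\<lambda>t. emeasure lborel (Pair t -` {p::real\<times>real. ennreal (fst p) < f (snd p)})) \<in> borel_measurable lborel"
    by (rule lborel.measurable_emeasure_Pair[OF Q])
  then show ?thesis by (simp add: vimage_def measurable_lborel1)
qed

lemma ennreal_mult_less:
  fixes x y :: ennreal
  assumes "ennreal a < x" "ennreal b < y" "0 \<le> a" "0 \<le> b"
  shows "ennreal a * ennreal b < x * y"
proof (cases x rule: ennreal_cases)
  case (real x')
  show ?thesis
  proof (cases y rule: ennreal_cases)
    case (real y')
    have "a < x'" "b < y'" using assms \<open>x = ennreal x'\<close> real by (auto simp: ennreal_less_iff)
    then have "a * b < x' * y'" using assms by (intro mult_strict_mono) auto
    then show ?thesis using \<open>x = ennreal x'\<close> real assms \<open>0 \<le> x'\<close>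
      by (simp add: ennreal_mult'[symmetric] ennreal_less_iff)
  next
    case top
    have "x \<noteq> 0" using assms(1) by auto
    then have "x * y = top" using top by (simp add: ennreal_mult_eq_top_iff)
    then show ?thesis by (simp add: ennreal_mult_less_top)
  qed
next
  case top
  have "y \<noteq> 0" using assms(2) by auto
  then have "x * y = top" using top by (simp add: ennreal_mult_eq_top_iff)
  then show ?thesis by (simp add: ennreal_mult_less_top)
qed

lemma amgm_ennreal: "4 * a * b \<le> (a + b)^2" for a b :: ennreal
proof (cases a rule: ennreal_cases)
  case (real a')
  then show ?thesis
  proof (cases b rule: ennreal_cases)
    case (real b')
    have e: "(a'+b')^2 - 4*a'*b' = (a'-b')^2" by (simp add: power2_eq_square algebra_simps)
    have "4 * a' * b' \<le> (a' + b')^2" using e zero_le_power2[of "a'-b'"] by linarith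
    moreover have "4 * ennreal a' * ennreal b' = ennreal (4*a'*b')"
      using real \<open>0 \<le> a'\<close> by (simp add: ennreal_mult)
    moreover have "(ennreal a' + ennreal b')^2 = ennreal ((a'+b')^2)"
      using real \<open>0 \<le> a'\<close> by (metis ennreal_plus ennreal_power add_nonneg_nonneg)
    ultimately show ?thesis using real \<open>a = ennreal a'\<close> by (simp add: ennreal_leI del: ennreal_plus)
  next
    case top then show ?thesis by (simp add: power2_eq_square)
  qed
next
  case top then show ?thesis by (simp add: power2_eq_square)
qed

lemma scaled_layer:
  fixes f :: "real \<Rightarrow> ennreal" assumes fm[measurable]: "f \<in> borel_measurable borel" and A: "0 < A"
  shows "(\<integral>\<^sup>+x. f x \<partial>lborel) = ennreal A * (\<integral>\<^sup>+s. indicator {0..} s * emeasure lborel {x. ennreal (A * s) < f x} \<partial>lborel)"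
proof -
  have [measurable]: "(\<lambda>t. emeasure lborel {x. ennreal t < f x}) \<in> borel_measurable borel"
    by (rule level_measurable[OF fm])
  have "(\<integral>\<^sup>+x. f x \<partial>lborel) = (\<integral>\<^sup>+t. indicator {0..} t * emeasure lborel {x. ennreal t < f x} \<partial>lborel)"
    by (rule layer_cake[OF fm])
  also have "\<dots> = ennreal \<bar>A\<bar> * (\<integral>\<^sup>+s. indicator {0..} (0 + A * s) * emeasure lborel {x. ennreal (0 + A * s) < f x} \<partial>lborel)"
    using A by (intro nn_integral_real_affine) auto
  also have "\<dots> = ennreal A * (\<integral>\<^sup>+s. indicator {0..} s * emeasure lborel {x. ennreal (A * s) < f x} \<partial>lborel)"
    using A by (auto intro!: nn_integral_cong arg_cong2[where f="(*)"] simp: indicator_def zero_le_mult_iff)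
  finally show ?thesis .
qed

lemma pl1_bdd:
  fixes f g h :: "real \<Rightarrow> ennreal"
  assumes fm[measurable]: "f \<in> borel_measurable borel" and gm[measurable]: "g \<in> borel_measurable borel"
    and hm[measurable]: "h \<in> borel_measurable borel"
    and fb: "\<And>x. f x \<le> ennreal Af" and gb: "\<And>x. g x \<le> ennreal Ag"
    and hyp: "\<And>x y. f x * g y \<le> h ((x + y)/2) ^ 2"
  shows "(\<integral>\<^sup>+x. f x \<partial>lborel) * (\<integral>\<^sup>+x. g x \<partial>lborel) \<le> (\<integral>\<^sup>+x. h x \<partial>lborel)^2"
proof (cases "(SUP x. f x) = 0 \<or> (SUP x. g x) = 0")
  case True
  have le: "f x \<le> (SUP x. f x)" "g x \<le> (SUP x. g x)" for x by (auto intro: SUP_upper)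
  from True have "(\<forall>x. f x = 0) \<or> (\<forall>x. g x = 0)" using le by (metis le_zero_eq)
  then show ?thesis by auto
next
  case False
  define A where "A = enn2real (SUP x. f x)"
  define B where "B = enn2real (SUP x. g x)"
  have "(SUP x. f x) \<le> ennreal Af" by (auto intro: SUP_least fb)
  then have SA: "(SUP x. f x) = ennreal A" unfolding A_def
    by (metis ennreal_enn2real ennreal_less_top order.strict_trans1 less_top)
  have "(SUP x. g x) \<le> ennreal Ag" by (auto intro: SUP_least gb)
  then have SB: "(SUP x. g x) = ennreal B" unfolding B_def
    by (metis ennreal_enn2real ennreal_less_top order.strict_trans1 less_top)
  have A0: "0 < A" using False SA unfolding A_def by (metis enn2real_nonneg ennreal_0 less_eq_real_def)
  have B0: "0 < B" using False SB unfolding B_def by (metis enn2real_nonneg ennreal_0 less_eq_real_def)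
  define C where "C = sqrt (A * B)"
  have C0: "0 < C" using A0 B0 unfolding C_def by simp
  have CC: "C * C = A * B" using A0 B0 unfolding C_def by (simp add: less_eq_real_def)
  define Ef where "Ef s = emeasure lborel {x. ennreal (A * s) < f x}" for s
  define Eg where "Eg s = emeasure lborel {x. ennreal (B * s) < g x}" for s
  define Eh where "Eh s = emeasure lborel {x. ennreal (C * s) < h x}" for s
  have mf: "Ef \<in> borel_measurable borel" unfolding Ef_def
    using measurable_compose[of "\<lambda>s. A * s" borel borel, OF _ level_measurable[OF fm]] by simp
  have mg: "Eg \<in> borel_measurable borel" unfolding Eg_def
    using measurable_compose[of "\<lambda>s. B * s" borel borel, OF _ level_measurable[OF gm]] by simp
  have mh: "Eh \<in> borel_measurable borel" unfolding Eh_def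
    using measurable_compose[of "\<lambda>s. C * s" borel borel, OF _ level_measurable[OF hm]] by simp
  note [measurable] = mf mg mh
  have bm: "Ef s + Eg s \<le> 2 * Eh s" if s: "0 \<le> s" "s < 1" for s
  proof -
    have "ennreal (A * s) < (SUP x. f x)" using SA A0 s by (simp add: ennreal_less_iff)
    then obtain x0 where x0: "ennreal (A * s) < f x0" by (auto simp: less_SUP_iff)
    have "ennreal (B * s) < (SUP x. g x)" using SB B0 s by (simp add: ennreal_less_iff)
    then obtain y0 where y0: "ennreal (B * s) < g y0" by (auto simp: less_SUP_iff)
    show ?thesis unfolding Ef_def Eg_def Eh_def
    proof (rule bm_borel)
      show "{x. ennreal (A * s) < f x} \<noteq> {}" "{x. ennreal (B * s) < g x} \<noteq> {}" using x0 y0 by auto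
      show "{x. ennreal (A * s) < f x} \<in> sets borel" "{x. ennreal (B * s) < g x} \<in> sets borel"
        "{x. ennreal (C * s) < h x} \<in> sets borel" by measurable
      fix x y assume x: "x \<in> {x. ennreal (A * s) < f x}" and y: "y \<in> {x. ennreal (B * s) < g x}"
      show "(x + y)/2 \<in> {x. ennreal (C * s) < h x}"
      proof (rule ccontr)
        assume "(x + y)/2 \<notin> {x. ennreal (C * s) < h x}"
        then have "h ((x+y)/2) \<le> ennreal (C * s)" by auto
        then have "h ((x+y)/2)^2 \<le> ennreal (C * s)^2" by (rule power_mono) auto
        also have "\<dots> = ennreal (A * s) * ennreal (B * s)"
          using A0 B0 C0 s CC by (simp add: ennreal_power[symmetric] ennreal_mult[symmetric] power2_eq_square algebra_simps)
        also have "\<dots> < f x * g y" using x y A0 B0 s by (intro ennreal_mult_less) auto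
        also have "\<dots> \<le> h ((x+y)/2)^2" by (rule hyp)
        finally show False by simp
      qed
    qed
  qed
  define a where "a = (\<integral>\<^sup>+s. indicator {0..<1} s * Ef s \<partial>lborel)"
  define b where "b = (\<integral>\<^sup>+s. indicator {0..<1} s * Eg s \<partial>lborel)"
  define z where "z = (\<integral>\<^sup>+s. indicator {0..<1} s * Eh s \<partial>lborel)"
  have F: "(\<integral>\<^sup>+x. f x \<partial>lborel) = ennreal A * a"
  proof -
    have "(\<integral>\<^sup>+x. f x \<partial>lborel) = ennreal A * (\<integral>\<^sup>+s. indicator {0..} s * Ef s \<partial>lborel)"
      unfolding Ef_def by (rule scaled_layer[OF fm A0])
    also have "(\<integral>\<^sup>+s. indicator {0..} s * Ef s \<partial>lborel) = a" unfolding a_def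
    proof (intro nn_integral_cong)
      fix s :: real
      have "Ef s = 0" if "1 \<le> s"
      proof -
        have "{x. ennreal (A * s) < f x} = {}"
        proof safe
          fix x assume "ennreal (A * s) < f x"
          moreover have "f x \<le> ennreal A" using SA by (metis SUP_upper UNIV_I)
          moreover have "A \<le> A * s" using A0 that by simp
          ultimately show "x \<in> {}" by (metis ennreal_leI not_le order_trans)
        qed
        then show ?thesis unfolding Ef_def by simp
      qed
      then show "indicator {0..} s * Ef s = indicator {0..<1} s * Ef s"
        by (cases "1 \<le> s") (auto simp: indicator_def)
    qed
    finally show ?thesis .
  qed
  have G: "(\<integral>\<^sup>+x. g x \<partial>lborel) = ennreal B * b"
  proof -
    have "(\<integral>\<^sup>+x. g x \<partial>lborel) = ennreal B * (\<integral>\<^sup>+s. indicator {0..} s * Eg s \<partial>lborel)"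
      unfolding Eg_def by (rule scaled_layer[OF gm B0])
    also have "(\<integral>\<^sup>+s. indicator {0..} s * Eg s \<partial>lborel) = b" unfolding b_def
    proof (intro nn_integral_cong)
      fix s :: real
      have "Eg s = 0" if "1 \<le> s"
      proof -
        have "{x. ennreal (B * s) < g x} = {}"
        proof safe
          fix x assume "ennreal (B * s) < g x"
          moreover have "g x \<le> ennreal B" using SB by (metis SUP_upper UNIV_I)
          moreover have "B \<le> B * s" using B0 that by simp
          ultimately show "x \<in> {}" by (metis ennreal_leI not_le order_trans)
        qed
        then show ?thesis unfolding Eg_def by simp
      qed
      then show "indicator {0..} s * Eg s = indicator {0..<1} s * Eg s"
        by (cases "1 \<le> s") (auto simp: indicator_def)
    qed
    finally show ?thesis .
  qed
  have H: "ennreal C * z \<le> (\<integral>\<^sup>+x. h x \<partial>lborel)"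
  proof -
    have "z \<le> (\<integral>\<^sup>+s. indicator {0..} s * Eh s \<partial>lborel)" unfolding z_def
      by (intro nn_integral_mono) (auto simp: indicator_def)
    then have "ennreal C * z \<le> ennreal C * (\<integral>\<^sup>+s. indicator {0..} s * Eh s \<partial>lborel)"
      by (rule mult_left_mono) auto
    also have "\<dots> = (\<integral>\<^sup>+x. h x \<partial>lborel)"
      unfolding Eh_def by (rule scaled_layer[OF hm C0, symmetric])
    finally show ?thesis .
  qed
  have abz: "a + b \<le> 2 * z"
  proof -
    have "a + b = (\<integral>\<^sup>+s. indicator {0..<1} s * Ef s + indicator {0..<1} s * Eg s \<partial>lborel)"
      unfolding a_def b_def by (rule nn_integral_add[symmetric]) auto
    also have "\<dots> \<le> (\<integral>\<^sup>+s. 2 * (indicator {0..<1} s * Eh s) \<partial>lborel)"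
    proof (intro nn_integral_mono)
      fix s :: real
      show "indicator {0..<1} s * Ef s + indicator {0..<1} s * Eg s \<le> 2 * (indicator {0..<1} s * Eh s)"
        using bm[of s] by (auto simp: indicator_def)
    qed
    also have "\<dots> = 2 * z" unfolding z_def by (rule nn_integral_cmult) auto
    finally show ?thesis .
  qed
  have ab: "a * b \<le> z^2"
  proof -
    have "4 * (a * b) = 4 * a * b" by (simp add: mult.assoc)
    also have "\<dots> \<le> (a + b)^2" by (rule amgm_ennreal)
    also have "\<dots> \<le> (2 * z)^2" using abz by (rule power_mono) auto
    also have "\<dots> = 4 * z^2" by (simp add: power2_eq_square algebra_simps)
    finally have "4 * (a * b) \<le> 4 * z^2" .
    then show ?thesis by (subst (asm) ennreal_mult_le_mult_iff) auto
  qed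
  have "(\<integral>\<^sup>+x. f x \<partial>lborel) * (\<integral>\<^sup>+x. g x \<partial>lborel) = (ennreal A * ennreal B) * (a * b)"
    unfolding F G by (simp add: algebra_simps)
  also have "\<dots> \<le> (ennreal A * ennreal B) * z^2" using ab by (rule mult_left_mono) auto
  also have "ennreal A * ennreal B = ennreal C ^ 2"
    using A0 B0 C0 CC by (simp add: ennreal_power[symmetric] ennreal_mult[symmetric] power2_eq_square)
  also have "ennreal C ^ 2 * z^2 = (ennreal C * z)^2" by (simp add: power_mult_distrib)
  also have "\<dots> \<le> (\<integral>\<^sup>+x. h x \<partial>lborel)^2" using H by (rule power_mono) auto
  finally show ?thesis .
qed

lemma SUP_min_nat: "(SUP n::nat. min a (of_nat n)) = (a::ennreal)"
proof (rule antisym)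
  show "(SUP n::nat. min a (of_nat n)) \<le> a" by (auto intro: SUP_least)
  show "a \<le> (SUP n::nat. min a (of_nat n))"
  proof (cases a rule: ennreal_cases)
    case (real r)
    obtain n :: nat where "r \<le> real n" using real_arch_simple by blast
    then have "min a (of_nat n) = a" using real by (simp add: min_def ennreal_of_nat_eq_real_of_nat)
    then show ?thesis by (metis SUP_upper UNIV_I)
  next
    case top
    have "(SUP n::nat. min a (of_nat n)) = (SUP n::nat. of_nat n)" using top by simp
    also have "\<dots> = top" by (rule ennreal_SUP_of_nat_eq_top)
    finally show ?thesis by (metis top_greatest)
  qed
qed

lemma incseq_min_nat: "incseq (\<lambda>n x. min (f x) (of_nat n :: ennreal))"
  unfolding incseq_def le_fun_def
proof (intro allI impI)
  fix m n :: nat and x assume "m \<le> n"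
  then have "(of_nat m :: ennreal) \<le> of_nat n" by simp
  then show "min (f x) (of_nat m) \<le> min (f x) (of_nat n)" by (rule min.mono[OF order_refl])
qed

lemma pl1:
  fixes f g h :: "real \<Rightarrow> ennreal"
  assumes fm[measurable]: "f \<in> borel_measurable borel" and gm[measurable]: "g \<in> borel_measurable borel"
    and hm[measurable]: "h \<in> borel_measurable borel"
    and hyp: "\<And>x y. f x * g y \<le> h ((x + y)/2) ^ 2"
  shows "(\<integral>\<^sup>+x. f x \<partial>lborel) * (\<integral>\<^sup>+x. g x \<partial>lborel) \<le> (\<integral>\<^sup>+x. h x \<partial>lborel)^2"
proof -
  define fn where "fn n x = min (f x) (of_nat n)" for n :: nat and x
  define gn where "gn n x = min (g x) (of_nat n)" for n :: nat and x
  have [measurable]: "fn n \<in> borel_measurable borel" "gn n \<in> borel_measurable borel" for n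
    unfolding fn_def gn_def by measurable
  have key: "(\<integral>\<^sup>+x. fn n x \<partial>lborel) * (\<integral>\<^sup>+x. gn m x \<partial>lborel) \<le> (\<integral>\<^sup>+x. h x \<partial>lborel)^2" for n m
  proof (rule pl1_bdd[where Af="real n" and Ag="real m"])
    show "fn n x \<le> ennreal (real n)" "gn m x \<le> ennreal (real m)" for x
      unfolding fn_def gn_def by (auto simp: ennreal_of_nat_eq_real_of_nat)
    show "fn n x * gn m y \<le> h ((x + y) / 2)^2" for x y
    proof -
      have "fn n x * gn m y \<le> f x * g y" unfolding fn_def gn_def by (intro mult_mono) auto
      also have "\<dots> \<le> h ((x + y) / 2)^2" by (rule hyp)
      finally show ?thesis .
    qed
  qed auto
  have If: "(\<integral>\<^sup>+x. f x \<partial>lborel) = (SUP n. \<integral>\<^sup>+x. fn n x \<partial>lborel)"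
  proof -
    have "(\<integral>\<^sup>+x. f x \<partial>lborel) = (\<integral>\<^sup>+x. (SUP n. fn n x) \<partial>lborel)"
      unfolding fn_def SUP_min_nat ..
    also have "\<dots> = (SUP n. \<integral>\<^sup>+x. fn n x \<partial>lborel)"
      by (rule nn_integral_monotone_convergence_SUP) (use incseq_min_nat[of f] in \<open>auto simp: fn_def\<close>)
    finally show ?thesis .
  qed
  have Ig: "(\<integral>\<^sup>+x. g x \<partial>lborel) = (SUP n. \<integral>\<^sup>+x. gn n x \<partial>lborel)"
  proof -
    have "(\<integral>\<^sup>+x. g x \<partial>lborel) = (\<integral>\<^sup>+x. (SUP n. gn n x) \<partial>lborel)"
      unfolding gn_def SUP_min_nat ..
    also have "\<dots> = (SUP n. \<integral>\<^sup>+x. gn n x \<partial>lborel)"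
      by (rule nn_integral_monotone_convergence_SUP) (use incseq_min_nat[of g] in \<open>auto simp: gn_def\<close>)
    finally show ?thesis .
  qed
  show ?thesis unfolding If Ig SUP_mult_right_ennreal SUP_mult_left_ennreal
    by (auto intro!: SUP_least key)
qed

abbreviation "PL I \<equiv> PiM I (\<lambda>_. (lborel :: real measure))"

lemma plN:
  assumes "finite I"
  shows "\<And>F G H. F \<in> borel_measurable (PL I) \<Longrightarrow> G \<in> borel_measurable (PL I) \<Longrightarrow> H \<in> borel_measurable (PL I) \<Longrightarrow>
    (\<And>x y. x \<in> space (PL I) \<Longrightarrow> y \<in> space (PL I) \<Longrightarrow> F x * G y \<le> H (restrict (\<lambda>j. (x j + y j)/2) I)^2) \<Longrightarrow>
    (\<integral>\<^sup>+x. F x \<partial>PL I) * (\<integral>\<^sup>+x. G x \<partial>PL I) \<le> (\<integral>\<^sup>+x. H x \<partial>PL I)^2"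
  using assms
proof (induction I rule: finite_induct)
  case empty
  let ?u = "(\<lambda>_. undefined) :: 'a \<Rightarrow> real"
  have sp: "?u \<in> space (PL {})" by (simp add: space_PiM)
  have r: "restrict (\<lambda>j. (?u j + ?u j)/2) {} = ?u" by auto
  have "F ?u * G ?u \<le> H ?u ^ 2" using empty(4)[OF sp sp] unfolding r .
  then show ?case by (simp add: PiM_empty nn_integral_count_space_finite)
next
  case (insert i I F G H)
  interpret product_sigma_finite "\<lambda>_. lborel :: real measure" by standard
  note [measurable] = insert.prems(1-3)
  have ins: "\<And>K::('a \<Rightarrow> real) \<Rightarrow> ennreal. K \<in> borel_measurable (PL (insert i I)) \<Longrightarrow>
     (\<integral>\<^sup>+x. K x \<partial>PL (insert i I)) = (\<integral>\<^sup>+t. (\<integral>\<^sup>+x. K (x(i := t)) \<partial>PL I) \<partial>lborel)"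
    using insert.hyps by (intro product_nn_integral_insert_rev) auto
  have sec: "\<And>(K::('a \<Rightarrow> real) \<Rightarrow> ennreal) t. K \<in> borel_measurable (PL (insert i I)) \<Longrightarrow> (\<lambda>x. K (x(i := t))) \<in> borel_measurable (PL I)"
  proof -
    fix K :: "('a \<Rightarrow> real) \<Rightarrow> ennreal" and t assume K[measurable]: "K \<in> borel_measurable (PL (insert i I))"
    show "(\<lambda>x. K (x(i := t))) \<in> borel_measurable (PL I)" using insert.hyps by measurable
  qed
  have marg: "\<And>K::('a \<Rightarrow> real) \<Rightarrow> ennreal. K \<in> borel_measurable (PL (insert i I)) \<Longrightarrow> (\<lambda>t. \<integral>\<^sup>+x. K (x(i := t)) \<partial>PL I) \<in> borel_measurable borel"
  proof -
    fix K :: "('a \<Rightarrow> real) \<Rightarrow> ennreal" assume [measurable]: "K \<in> borel_measurable (PL (insert i I))"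
    have "(\<lambda>(t, x). K (x(i := t))) \<in> borel_measurable (lborel \<Otimes>\<^sub>M PL I)"
      using insert.hyps by measurable
    then have "(\<lambda>t. \<integral>\<^sup>+x. K (x(i := t)) \<partial>PL I) \<in> borel_measurable lborel"
      using sigma_finite_measure.borel_measurable_nn_integral[OF sigma_finite[OF insert.hyps(1)], of "\<lambda>t x. K (x(i:=t))" lborel]
      by simp
    then show "(\<lambda>t. \<integral>\<^sup>+x. K (x(i := t)) \<partial>PL I) \<in> borel_measurable borel" by simp
  qed
  show ?case unfolding ins[OF insert.prems(1)] ins[OF insert.prems(2)] ins[OF insert.prems(3)]
  proof (rule pl1[OF marg marg marg])
    fix s r :: real
    show "(\<integral>\<^sup>+x. F (x(i := s)) \<partial>PL I) * (\<integral>\<^sup>+x. G (x(i := r)) \<partial>PL I) \<le> (\<integral>\<^sup>+x. H (x(i := (s + r)/2)) \<partial>PL I)^2"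
    proof (rule insert.IH[OF sec sec sec])
      fix x y assume x: "x \<in> space (PL I)" and y: "y \<in> space (PL I)"
      have x': "x(i := s) \<in> space (PL (insert i I))" using x by (auto simp: space_PiM PiE_def extensional_def)
      have y': "y(i := r) \<in> space (PL (insert i I))" using y by (auto simp: space_PiM PiE_def extensional_def)
      have eq: "restrict (\<lambda>j. ((x(i := s)) j + (y(i := r)) j)/2) (insert i I) = (restrict (\<lambda>j. (x j + y j)/2) I)(i := (s + r)/2)"
        using insert.hyps by (auto simp: fun_eq_iff)
      show "F (x(i := s)) * G (y(i := r)) \<le> H ((restrict (\<lambda>j. (x j + y j)/2) I)(i := (s + r)/2))^2"
        using insert.prems(4)[OF x' y'] unfolding eq .
    qed (use insert.prems in auto)
  qed (use insert.prems in auto)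
qed

lemma Basis_vec_eq: "(Basis :: (real^'n) set) = range (\<lambda>j. axis j 1)"
  unfolding Basis_vec_def by auto

lemma vec_lambda_measurable[measurable]:
  "(vec_lambda :: ('n::finite \<Rightarrow> real) \<Rightarrow> real^'n) \<in> PL UNIV \<rightarrow>\<^sub>M borel"
proof (subst borel_measurable_euclidean_space, intro ballI)
  fix b :: "real^'n" assume "b \<in> Basis"
  then obtain j where b: "b = axis j 1" unfolding Basis_vec_eq by auto
  have "(\<lambda>x. vec_lambda x \<bullet> b) = (\<lambda>x. x j)" unfolding b by (simp add: inner_axis)
  then show "(\<lambda>x. vec_lambda x \<bullet> b) \<in> borel_measurable (PL UNIV)" by simp
qed

lemma lborel_vec: "distr (PL UNIV) borel (vec_lambda :: ('n::finite \<Rightarrow> real) \<Rightarrow> real^'n) = lborel"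
proof (rule lborel_eqI[symmetric])
  interpret product_sigma_finite "\<lambda>_. lborel :: real measure" by standard
  fix l u :: "real^'n" assume le: "\<And>b. b \<in> Basis \<Longrightarrow> l \<bullet> b \<le> u \<bullet> b"
  have le': "l $ j \<le> u $ j" for j using le[of "axis j 1"] unfolding Basis_vec_eq by (simp add: inner_axis)
  have pre: "vec_lambda -` box l u \<inter> space (PL UNIV) = PiE UNIV (\<lambda>j. {l$j<..<u$j})"
    by (auto simp: space_PiM mem_box_cart PiE_def extensional_def Pi_def)
  have "emeasure (distr (PL UNIV) borel (vec_lambda :: ('n \<Rightarrow> real) \<Rightarrow> real^'n)) (box l u)
      = emeasure (PL UNIV) (PiE UNIV (\<lambda>j. {l$j<..<u$j}))"
    by (subst emeasure_distr) (auto simp: pre)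
  also have "\<dots> = (\<Prod>j\<in>UNIV. emeasure lborel {l$j<..<u$j})"
    by (rule emeasure_PiM) auto
  also have "\<dots> = (\<Prod>j\<in>UNIV. ennreal (u$j - l$j))" using le' by simp
  also have "\<dots> = ennreal (\<Prod>j\<in>UNIV. (u$j - l$j))" using le' by (simp add: prod_ennreal)
  also have "(\<Prod>j\<in>UNIV. (u$j - l$j)) = (\<Prod>b\<in>Basis. (u - l) \<bullet> b)"
  proof -
    have "(\<Prod>b\<in>Basis. (u - l) \<bullet> b) = (\<Prod>b\<in>range (\<lambda>j. axis j (1::real)). (u - l) \<bullet> b)"
      by (simp add: Basis_vec_eq)
    also have "\<dots> = (\<Prod>j\<in>UNIV. (u - l) \<bullet> axis j 1)"
      by (subst prod.reindex) (auto simp: inj_on_def axis_eq_axis)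
    also have "\<dots> = (\<Prod>j\<in>UNIV. (u$j - l$j))" by (simp add: inner_axis)
    finally show ?thesis by simp
  qed
  finally show "emeasure (distr (PL UNIV) borel (vec_lambda :: ('n \<Rightarrow> real) \<Rightarrow> real^'n)) (box l u) = ennreal (\<Prod>b\<in>Basis. (u - l) \<bullet> b)" .
qed simp

lemma nn_integral_vec:
  fixes G :: "real^'n::finite \<Rightarrow> ennreal" assumes [measurable]: "G \<in> borel_measurable borel"
  shows "(\<integral>\<^sup>+v. G v \<partial>lborel) = (\<integral>\<^sup>+x. G (vec_lambda x) \<partial>PL UNIV)"
  by (subst lborel_vec[symmetric]) (simp add: nn_integral_distr)

lemma refl_PL:
  assumes "finite I"
  shows "\<And>F. F \<in> borel_measurable (PL I) \<Longrightarrow> (\<integral>\<^sup>+x. F (restrict (\<lambda>j. - x j) I) \<partial>PL I) = (\<integral>\<^sup>+x. F x \<partial>PL I)"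
  using assms
proof (induction I rule: finite_induct)
  case empty
  then show ?case by (simp add: PiM_empty nn_integral_count_space_finite)
next
  case (insert i I F)
  interpret product_sigma_finite "\<lambda>_. lborel :: real measure" by standard
  note [measurable] = insert.prems(1)
  have m1: "(\<lambda>x. F (restrict (\<lambda>j. - x j) (insert i I))) \<in> borel_measurable (PL (insert i I))"
    by measurable
  have marg: "(\<lambda>t. \<integral>\<^sup>+x. F (x(i := t)) \<partial>PL I) \<in> borel_measurable borel"
  proof -
    have "(\<lambda>(t, x). F (x(i := t))) \<in> borel_measurable (lborel \<Otimes>\<^sub>M PL I)"
      using insert.hyps by measurable
    then have "(\<lambda>t. \<integral>\<^sup>+x. F (x(i := t)) \<partial>PL I) \<in> borel_measurable lborel"
      using sigma_finite_measure.borel_measurable_nn_integral[OF sigma_finite[OF insert.hyps(1)], of "\<lambda>t x. F (x(i:=t))" lborel]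
      by simp
    then show ?thesis by simp
  qed
  have "(\<integral>\<^sup>+x. F (restrict (\<lambda>j. - x j) (insert i I)) \<partial>PL (insert i I))
      = (\<integral>\<^sup>+t. (\<integral>\<^sup>+x. F (restrict (\<lambda>j. - (x(i := t)) j) (insert i I)) \<partial>PL I) \<partial>lborel)"
    using insert.hyps m1 by (intro product_nn_integral_insert_rev) auto
  also have "\<dots> = (\<integral>\<^sup>+t. (\<integral>\<^sup>+x. F ((restrict (\<lambda>j. - x j) I)(i := - t)) \<partial>PL I) \<partial>lborel)"
  proof (intro nn_integral_cong)
    fix t :: real and x assume "x \<in> space (PL I)"
    have "restrict (\<lambda>j. - (x(i := t)) j) (insert i I) = (restrict (\<lambda>j. - x j) I)(i := - t)"
      using insert.hyps by (auto simp: fun_eq_iff)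
    then show "F (restrict (\<lambda>j. - (x(i := t)) j) (insert i I)) = F ((restrict (\<lambda>j. - x j) I)(i := - t))" by simp
  qed
  also have "\<dots> = (\<integral>\<^sup>+t. (\<integral>\<^sup>+x. F (x(i := - t)) \<partial>PL I) \<partial>lborel)"
  proof (rule nn_integral_cong)
    fix t :: real
    have "(\<lambda>x. F (x(i := - t))) \<in> borel_measurable (PL I)" using insert.hyps by measurable
    show "(\<integral>\<^sup>+x. F ((restrict (\<lambda>j. - x j) I)(i := - t)) \<partial>PL I) = (\<integral>\<^sup>+x. F (x(i := - t)) \<partial>PL I)"
      using insert.IH[OF \<open>(\<lambda>x. F (x(i := - t))) \<in> borel_measurable (PL I)\<close>] .
  qed
  also have "\<dots> = (\<integral>\<^sup>+t. (\<integral>\<^sup>+x. F (x(i := t)) \<partial>PL I) \<partial>lborel)"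
    using nn_integral_real_affine[OF marg, of "-1" 0] by simp
  also have "\<dots> = (\<integral>\<^sup>+x. F x \<partial>PL (insert i I))"
    using insert.hyps by (intro product_nn_integral_insert_rev[symmetric]) auto
  finally show ?case .
qed

definition reflo :: "'n \<Rightarrow> real^'n \<Rightarrow> real^'n" where
  "reflo i q = (\<chi> j. if j = i then q$j else - q$j)"

lemma inner_axis1: "inner x (axis i (1::real)) = x $ i" for x :: "real^'n"
  by (simp add: inner_axis)

lemma inner_reflo:
  fixes y q :: "real^'n" assumes "y $ i = 0"
  shows "inner y (reflo i q) = - inner y q"
proof -
  have "inner y (reflo i q) = (\<Sum>j\<in>UNIV. y$j * (reflo i q)$j)" by (simp add: inner_vec_def)
  also have "\<dots> = (\<Sum>j\<in>UNIV. - (y$j * q$j))"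
    using assms by (intro sum.cong) (auto simp: reflo_def)
  also have "\<dots> = - inner y q" by (simp add: inner_vec_def sum_negf)
  finally show ?thesis .
qed

lemma reflo_nth_i[simp]: "reflo i q $ i = q $ i" by (simp add: reflo_def)

lemma polar_mid:
  fixes K :: "(real^'n) set" and i :: 'n
  assumes sym: "symmetric_set K"
    and p: "p \<in> polar K" and q: "reflo i q \<in> polar K" and pq: "p$i = q$i"
  shows "(1/2) *\<^sub>R (p + q) \<in> polar (steiner_symmetral (axis i 1) K)"
  unfolding polar_def
proof (safe)
  fix w assume "w \<in> steiner_symmetral (axis i 1) K"
  then obtain y where y0: "inner y (axis i 1) = 0" and
     "w \<in> (\<lambda>c. y + c *\<^sub>R axis i 1) ` {(s + r)/2 | s r. s \<in> fiber K (axis i 1) y \<and> r \<in> uminus ` fiber K (axis i 1) y}"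
    unfolding steiner_symmetral_def by blast
  then obtain c where w: "w = y + c *\<^sub>R axis i 1" and
     "c \<in> {(s + r)/2 | s r. s \<in> fiber K (axis i 1) y \<and> r \<in> uminus ` fiber K (axis i 1) y}"
    by blast
  then obtain s r where c: "c = (s + r)/2" and sf: "s \<in> fiber K (axis i 1) y" and rf: "r \<in> uminus ` fiber K (axis i 1) y"
    by blast
  from rf obtain r' where rr: "r = - r'" and rf': "r' \<in> fiber K (axis i 1) y" by blast
  have s: "y + s *\<^sub>R axis i 1 \<in> K" using sf unfolding fiber_def by simp
  have r: "y + (- r) *\<^sub>R axis i 1 \<in> K" using rf' rr unfolding fiber_def by simp
  have yi: "y $ i = 0" using y0 by (simp add: inner_axis1)
  have "- (y + (- r) *\<^sub>R axis i 1) \<in> K" using sym r unfolding symmetric_set_def by (metis image_eqI)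
  then have h2: "inner (- (y + (- r) *\<^sub>R axis i 1)) (reflo i q) \<le> 1" using q unfolding polar_def by auto
  have h1: "inner (y + s *\<^sub>R axis i 1) p \<le> 1" using p s unfolding polar_def by auto
  have e1: "inner (y + s *\<^sub>R axis i 1) p = inner y p + s * p$i"
    by (simp add: inner_add_left inner_commute[of "axis i 1"] inner_axis1)
  have e2: "inner (- (y + (- r) *\<^sub>R axis i 1)) (reflo i q) = inner y q + r * q$i"
  proof -
    have "- (y + (- r) *\<^sub>R axis i 1) = r *\<^sub>R axis i 1 - y" by simp
    moreover have "inner (r *\<^sub>R axis i 1 - y) (reflo i q) = r * (reflo i q $ i) - inner y (reflo i q)"
      by (simp add: inner_diff_left inner_commute[of "axis i 1"] inner_axis1)
    ultimately show ?thesis using inner_reflo[OF yi, of q] by simp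
  qed
  have e3: "inner w ((1/2) *\<^sub>R (p + q)) = (inner y p + inner y q)/2 + ((s + r)/2) * ((p$i + q$i)/2)"
    unfolding w c by (simp add: inner_add_left inner_add_right inner_commute[of "axis i 1"] inner_axis1 algebra_simps) (simp add: field_simps)
  show "inner w ((1/2) *\<^sub>R (p + q)) \<le> 1"
    using h1 h2 unfolding e1 e2 e3 pq by (simp add: field_simps)
qed

lemma axis_nth': "(axis i c :: real^'n) $ j = (if j = i then c else 0)"
  by (simp add: axis_def)

lemma SK_eq:
  fixes K :: "(real^'n) set"
  shows "steiner_symmetral (axis i 1) K =
    (\<lambda>(p, q). p - ((p$i + q$i)/2) *\<^sub>R axis i 1) ` {pq \<in> K \<times> K. \<forall>j. j \<noteq> i \<longrightarrow> fst pq $ j = snd pq $ j}"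
proof (rule set_eqI, rule iffI)
  fix w assume "w \<in> steiner_symmetral (axis i 1) K"
  then obtain y where y0: "inner y (axis i 1) = 0" and
     "w \<in> (\<lambda>c. y + c *\<^sub>R axis i 1) ` {(s + r)/2 | s r. s \<in> fiber K (axis i 1) y \<and> r \<in> uminus ` fiber K (axis i 1) y}"
    unfolding steiner_symmetral_def by blast
  then obtain c where w: "w = y + c *\<^sub>R axis i 1" and
     "c \<in> {(s + r)/2 | s r. s \<in> fiber K (axis i 1) y \<and> r \<in> uminus ` fiber K (axis i 1) y}"
    by blast
  then obtain s r where c: "c = (s + r)/2" and sf: "s \<in> fiber K (axis i 1) y" and rf: "r \<in> uminus ` fiber K (axis i 1) y"
    by blast
  from rf obtain r' where rr: "r = - r'" and rf': "r' \<in> fiber K (axis i 1) y" by blast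
  have yi: "y $ i = 0" using y0 by (simp add: inner_axis1)
  define p where "p = y + s *\<^sub>R axis i 1"
  define q where "q = y + r' *\<^sub>R axis i 1"
  have "p \<in> K" "q \<in> K" using sf rf' unfolding fiber_def p_def q_def by auto
  moreover have "\<forall>j. j \<noteq> i \<longrightarrow> p $ j = q $ j" unfolding p_def q_def by (simp add: axis_nth')
  moreover have "w = p - ((p$i + q$i)/2) *\<^sub>R axis i 1"
    unfolding w c rr p_def q_def using yi by (simp add: vec_eq_iff axis_nth' field_simps)
  ultimately show "w \<in> (\<lambda>(p, q). p - ((p$i + q$i)/2) *\<^sub>R axis i 1) ` {pq \<in> K \<times> K. \<forall>j. j \<noteq> i \<longrightarrow> fst pq $ j = snd pq $ j}"
    by (intro image_eqI[of _ _ "(p, q)"]) auto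
next
  fix w assume "w \<in> (\<lambda>(p, q). p - ((p$i + q$i)/2) *\<^sub>R axis i 1) ` {pq \<in> K \<times> K. \<forall>j. j \<noteq> i \<longrightarrow> fst pq $ j = snd pq $ j}"
  then obtain p q where pK: "p \<in> K" and qK: "q \<in> K" and pq: "\<forall>j. j \<noteq> i \<longrightarrow> p $ j = q $ j"
    and w: "w = p - ((p$i + q$i)/2) *\<^sub>R axis i 1" by auto
  define y where "y = p - (p$i) *\<^sub>R axis i 1"
  have y0: "inner y (axis i 1) = 0" unfolding y_def by (simp add: inner_axis1 axis_nth')
  have sf: "p$i \<in> fiber K (axis i 1) y" unfolding fiber_def y_def using pK by simp
  have "y + (q$i) *\<^sub>R axis i 1 = q" unfolding y_def using pq by (auto simp: vec_eq_iff axis_nth')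
  then have rf: "- (q$i) \<in> uminus ` fiber K (axis i 1) y" unfolding fiber_def using qK by auto
  have "w = y + ((p$i + - (q$i))/2) *\<^sub>R axis i 1"
    unfolding w y_def by (simp add: vec_eq_iff axis_nth' field_simps)
  then show "w \<in> steiner_symmetral (axis i 1) K"
    unfolding steiner_symmetral_def using y0 sf rf by blast
qed

lemma SK_compact:
  fixes K :: "(real^'n) set" assumes "compact K"
  shows "compact (steiner_symmetral (axis i 1) K)"
proof -
  have cl: "closed {pq :: (real^'n) \<times> (real^'n). \<forall>j. j \<noteq> i \<longrightarrow> fst pq $ j = snd pq $ j}"
  proof -
    have "{pq :: (real^'n) \<times> (real^'n). \<forall>j. j \<noteq> i \<longrightarrow> fst pq $ j = snd pq $ j}
        = (\<Inter>j\<in>-{i}. {pq. fst pq $ j = snd pq $ j})" by auto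
    moreover have "closed {pq :: (real^'n) \<times> (real^'n). fst pq $ j = snd pq $ j}" for j
      by (intro closed_Collect_eq continuous_intros)
    ultimately show ?thesis by (auto intro: closed_INT)
  qed
  have "compact {pq \<in> K \<times> K. \<forall>j. j \<noteq> i \<longrightarrow> fst pq $ j = snd pq $ j}"
  proof -
    have "{pq \<in> K \<times> K. \<forall>j. j \<noteq> i \<longrightarrow> fst pq $ j = snd pq $ j} = (K \<times> K) \<inter> {pq. \<forall>j. j \<noteq> i \<longrightarrow> fst pq $ j = snd pq $ j}"
      by auto
    then show ?thesis using compact_Int_closed[OF compact_Times[OF assms assms] cl] by simp
  qed
  moreover have "continuous_on UNIV (\<lambda>(p, q). p - ((p$i + q$i)/2) *\<^sub>R axis i 1 :: real^'n)"
    by (auto intro!: continuous_intros simp: case_prod_unfold)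
  ultimately show ?thesis unfolding SK_eq
    by (meson compact_continuous_image continuous_on_subset subset_UNIV)
qed

lemma fiber_ineq:
  fixes \<phi> :: "real \<Rightarrow> real"
  assumes m[measurable]: "\<phi> \<in> borel_measurable borel" and nn: "\<And>t. 0 \<le> \<phi> t"
    and uni: "\<And>s t. \<bar>s\<bar> \<le> \<bar>t\<bar> \<Longrightarrow> \<phi> t \<le> \<phi> s"
    and ab: "a \<le> b"
  shows "(\<integral>\<^sup>+t. ennreal (\<phi> t) * indicator {a..b} t \<partial>lborel) \<le> (\<integral>\<^sup>+t. ennreal (\<phi> t) * indicator {-((b-a)/2)..(b-a)/2} t \<partial>lborel)"
proof -
  define c where "c = (b - a)/2"
  define J where "J = {a..b}"
  define I where "I = {-c..c}"
  have c0: "0 \<le> c" using ab unfolding c_def by simp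
  have [measurable]: "J \<in> sets borel" "I \<in> sets borel" unfolding J_def I_def by auto
  have split: "(\<integral>\<^sup>+t. ennreal (\<phi> t) * indicator A t \<partial>lborel) =
     (\<integral>\<^sup>+t. ennreal (\<phi> t) * indicator (A \<inter> B) t \<partial>lborel) + (\<integral>\<^sup>+t. ennreal (\<phi> t) * indicator (A - B) t \<partial>lborel)"
    if [measurable]: "A \<in> sets borel" "B \<in> sets borel" for A B
  proof -
    have "(\<integral>\<^sup>+t. ennreal (\<phi> t) * indicator A t \<partial>lborel) =
      (\<integral>\<^sup>+t. ennreal (\<phi> t) * indicator (A \<inter> B) t + ennreal (\<phi> t) * indicator (A - B) t \<partial>lborel)"
      by (intro nn_integral_cong) (auto split: split_indicator)
    also have "\<dots> = (\<integral>\<^sup>+t. ennreal (\<phi> t) * indicator (A \<inter> B) t \<partial>lborel) + (\<integral>\<^sup>+t. ennreal (\<phi> t) * indicator (A - B) t \<partial>lborel)"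
      by (rule nn_integral_add) auto
    finally show ?thesis .
  qed
  have up: "(\<integral>\<^sup>+t. ennreal (\<phi> t) * indicator (J - I) t \<partial>lborel) \<le> ennreal (\<phi> c) * emeasure lborel (J - I)"
  proof -
    have "(\<integral>\<^sup>+t. ennreal (\<phi> t) * indicator (J - I) t \<partial>lborel) \<le> (\<integral>\<^sup>+t. ennreal (\<phi> c) * indicator (J - I) t \<partial>lborel)"
    proof (intro nn_integral_mono)
      fix t show "ennreal (\<phi> t) * indicator (J - I) t \<le> ennreal (\<phi> c) * indicator (J - I) t"
      proof (cases "t \<in> J - I")
        case True
        then have "\<bar>c\<bar> \<le> \<bar>t\<bar>" using c0 unfolding I_def by auto
        then show ?thesis using True uni[of c t] by (simp add: ennreal_leI)
      qed simp
    qed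
    also have "\<dots> = ennreal (\<phi> c) * emeasure lborel (J - I)" by (simp add: nn_integral_cmult_indicator)
    finally show ?thesis .
  qed
  have low: "ennreal (\<phi> c) * emeasure lborel (I - J) \<le> (\<integral>\<^sup>+t. ennreal (\<phi> t) * indicator (I - J) t \<partial>lborel)"
  proof -
    have "ennreal (\<phi> c) * emeasure lborel (I - J) = (\<integral>\<^sup>+t. ennreal (\<phi> c) * indicator (I - J) t \<partial>lborel)"
      by (simp add: nn_integral_cmult_indicator)
    also have "\<dots> \<le> (\<integral>\<^sup>+t. ennreal (\<phi> t) * indicator (I - J) t \<partial>lborel)"
    proof (intro nn_integral_mono)
      fix t show "ennreal (\<phi> c) * indicator (I - J) t \<le> ennreal (\<phi> t) * indicator (I - J) t"
      proof (cases "t \<in> I - J")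
        case True
        then have "\<bar>t\<bar> \<le> \<bar>c\<bar>" using c0 unfolding I_def by auto
        then show ?thesis using True uni[of t c] by (simp add: ennreal_leI)
      qed simp
    qed
    finally show ?thesis .
  qed
  have meq: "emeasure lborel (J - I) = emeasure lborel (I - J)"
  proof -
    have "emeasure lborel J = emeasure lborel I"
    proof -
      have "emeasure lborel I = ennreal (c - - c)" unfolding I_def using c0 by (simp del: minus_minus)
      also have "c - - c = b - a" unfolding c_def by simp
      finally show ?thesis unfolding J_def using ab by simp
    qed
    moreover have "emeasure lborel J \<noteq> \<infinity>" unfolding J_def using ab by simp
    ultimately have fin: "emeasure lborel I \<noteq> \<infinity>" and eqJI: "emeasure lborel J = emeasure lborel I" by auto
    have s2: "I - (J \<inter> I) = I - J" by auto
    have "emeasure lborel (J \<inter> I) \<le> emeasure lborel I" by (intro emeasure_mono) auto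
    then have fin2: "emeasure lborel (J \<inter> I) \<noteq> \<infinity>" using fin by (metis infinity_ennreal_def top.extremum_uniqueI)
    have "J - I = J - (J \<inter> I)" by auto
    then have "emeasure lborel (J - I) = emeasure lborel (J - (J \<inter> I))" by simp
    also have "\<dots> = emeasure lborel J - emeasure lborel (J \<inter> I)"
      using fin eqJI fin2 by (intro emeasure_Diff) auto
    also have "\<dots> = emeasure lborel I - emeasure lborel (J \<inter> I)" using eqJI by simp
    also have "\<dots> = emeasure lborel (I - (J \<inter> I))"
      using fin fin2 by (intro emeasure_Diff[symmetric]) auto
    also have "\<dots> = emeasure lborel (I - J)" by (simp only: s2)
    finally show ?thesis .
  qed
  have "(\<integral>\<^sup>+t. ennreal (\<phi> t) * indicator J t \<partial>lborel) =
     (\<integral>\<^sup>+t. ennreal (\<phi> t) * indicator (J \<inter> I) t \<partial>lborel) + (\<integral>\<^sup>+t. ennreal (\<phi> t) * indicator (J - I) t \<partial>lborel)"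
    by (rule split) auto
  also have "\<dots> \<le> (\<integral>\<^sup>+t. ennreal (\<phi> t) * indicator (I \<inter> J) t \<partial>lborel) + (\<integral>\<^sup>+t. ennreal (\<phi> t) * indicator (I - J) t \<partial>lborel)"
    using up low meq by (simp add: Int_commute add_left_mono order_trans)
  also have "\<dots> = (\<integral>\<^sup>+t. ennreal (\<phi> t) * indicator I t \<partial>lborel)"
    by (rule split[symmetric]) auto
  finally show ?thesis unfolding J_def I_def c_def .
qed

definition reps :: "('n \<Rightarrow> real) \<Rightarrow> real^'n \<Rightarrow> real^'n" where
  "reps \<epsilon> x = (\<chi> j. \<epsilon> j * x$j)"

lemma reps_reps: "(\<forall>j. \<epsilon> j \<in> {-1, 1}) \<Longrightarrow> reps \<epsilon> (reps \<epsilon> x) = x"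
proof -
  assume e: "\<forall>j. \<epsilon> j \<in> {-1, 1}"
  have "reps \<epsilon> (reps \<epsilon> x) $ k = x $ k" for k unfolding reps_def using e[rule_format, of k] by auto
  then show ?thesis by (simp add: vec_eq_iff)
qed

lemma norm_reps: "(\<forall>j. \<epsilon> j \<in> {-1, 1}) \<Longrightarrow> norm (reps \<epsilon> x) = norm x"
proof -
  assume e: "\<forall>j. \<epsilon> j \<in> {-1, 1}"
  have "norm (reps \<epsilon> x) = L2_set (\<lambda>j. norm ((reps \<epsilon> x)$j)) UNIV" by (simp add: norm_vec_def)
  also have "\<dots> = L2_set (\<lambda>j. norm (x$j)) UNIV"
  proof (intro L2_set_cong)
    fix j
    have "\<bar>\<epsilon> j\<bar> = 1" using e[rule_format, of j] by auto
    then show "norm ((reps \<epsilon> x)$j) = norm (x$j)" by (simp add: reps_def abs_mult)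
  qed simp
  also have "\<dots> = norm x" by (simp add: norm_vec_def)
  finally show ?thesis .
qed

lemma reps_diff: "reps \<epsilon> x - reps \<epsilon> y = reps \<epsilon> (x - y)"
  unfolding reps_def by (simp add: vec_eq_iff algebra_simps)

lemma logconc_pos:
  assumes lc: "log_concave_fun f" and x: "0 < f x" and y: "0 < f y" and t: "0 \<le> t" "t \<le> 1"
  shows "0 < f ((1 - t) *\<^sub>R x + t *\<^sub>R y)"
proof -
  consider "t = 0" | "t = 1" | "0 < t \<and> t < 1" using t by linarith
  then show ?thesis
  proof cases
    case 3
    then have "f x powr (1 - t) * f y powr t \<le> f ((1 - t) *\<^sub>R x + t *\<^sub>R y)" using lc unfolding log_concave_fun_def by blast
    moreover have "0 < f x powr (1 - t) * f y powr t" using x y by simp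
    ultimately show ?thesis by linarith
  qed (use x y in auto)
qed

lemma logconc_ln:
  assumes lc: "log_concave_fun f" and x: "0 < f x" and y: "0 < f y" and t: "0 < t" "t < 1"
  shows "(1 - t) * ln (f x) + t * ln (f y) \<le> ln (f ((1 - t) *\<^sub>R x + t *\<^sub>R y))"
proof -
  have h: "f x powr (1 - t) * f y powr t \<le> f ((1 - t) *\<^sub>R x + t *\<^sub>R y)" using lc t unfolding log_concave_fun_def by blast
  have p: "0 < f x powr (1 - t) * f y powr t" using x y by simp
  have "(1 - t) * ln (f x) + t * ln (f y) = ln (f x powr (1 - t) * f y powr t)"
    using x y by (simp add: ln_mult ln_powr)
  also have "\<dots> \<le> ln (f ((1 - t) *\<^sub>R x + t *\<^sub>R y))" using h p by simp
  finally show ?thesis .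
qed

locale goodf =
  fixes f :: "real^'n \<Rightarrow> real"
  assumes fm: "f \<in> borel_measurable lebesgue" and lc: "log_concave_fun f"
    and fsym: "\<And>x (\<epsilon>::'n \<Rightarrow> real). (\<forall>j. \<epsilon> j \<in> {-1, 1}) \<Longrightarrow> f (\<chi> j. \<epsilon> j * x $ j) = f x"
begin

definition "D = {x. 0 < f x}"
definition "U = interior D"
definition "g x = indicator U x * f x"

lemma f_nonneg: "0 \<le> f x" using lc unfolding log_concave_fun_def by blast

lemma convex_D: "convex D"
  unfolding convex_alt D_def using logconc_pos[OF lc] by (auto simp: algebra_simps)

lemma convex_U: "convex U" unfolding U_def using convex_D by (rule convex_interior)

lemma open_U: "open U" unfolding U_def by simp

lemma U_sub: "U \<subseteq> D" unfolding U_def by (rule interior_subset)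

lemma contU: "continuous_on U f"
proof -
  have "convex_on U (\<lambda>x. - ln (f x))"
  proof (rule convex_onI)
    fix t :: real and x y assume t: "0 < t" "t < 1" and x: "x \<in> U" and y: "y \<in> U"
    have "0 < f x" "0 < f y" using x y U_sub unfolding D_def by auto
    then have "(1 - t) * ln (f x) + t * ln (f y) \<le> ln (f ((1 - t) *\<^sub>R x + t *\<^sub>R y))"
      using logconc_ln[of f x y t] lc t by blast
    then show "- ln (f ((1 - t) *\<^sub>R x + t *\<^sub>R y)) \<le> (1 - t) * - ln (f x) + t * - ln (f y)" by simp
  qed (rule convex_U)
  then have c: "continuous_on U (\<lambda>x. - ln (f x))" by (rule convex_on_continuous[OF open_U])
  have "continuous_on U (\<lambda>x. exp (- (- ln (f x))))" by (intro continuous_intros c)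
  moreover have "exp (- (- ln (f x))) = f x" if "x \<in> U" for x using that U_sub unfolding D_def by auto
  ultimately show ?thesis by (metis (no_types, lifting) continuous_on_cong)
qed

lemma g_borel: "g \<in> borel_measurable borel"
proof -
  have "(\<lambda>x. indicator U x *\<^sub>R f x) \<in> borel_measurable borel"
    by (rule borel_measurable_continuous_on_indicator[OF borel_open[OF open_U] contU])
  then show ?thesis unfolding g_def[abs_def] by simp
qed

lemma g_nonneg: "0 \<le> g x" unfolding g_def using f_nonneg by (simp add: indicator_def)

lemma g_lc: "log_concave_fun g"
  unfolding log_concave_fun_def
proof (intro conjI allI impI)
  fix x show "0 \<le> g x" by (rule g_nonneg)
next
  fix x y and t :: real assume t: "0 < t \<and> t < 1"
  show "g x powr (1 - t) * g y powr t \<le> g ((1 - t) *\<^sub>R x + t *\<^sub>R y)"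
  proof (cases "x \<in> U \<and> y \<in> U")
    case True
    then have "(1 - t) *\<^sub>R x + t *\<^sub>R y \<in> U" using convex_U t unfolding convex_alt by (auto simp: algebra_simps)
    then show ?thesis using True lc t unfolding g_def log_concave_fun_def by auto
  next
    case False
    then have "g x = 0 \<or> g y = 0" unfolding g_def by auto
    then have z: "g x powr (1 - t) * g y powr t = 0"
    proof
      assume "g x = 0" then show ?thesis by simp
    next
      assume "g y = 0" then show ?thesis by simp
    qed
    have "0 \<le> g ((1 - t) *\<^sub>R x + t *\<^sub>R y)" by (rule g_nonneg)
    then show ?thesis unfolding z .
  qed
qed

lemma reps_D: "(\<forall>j. \<epsilon> j \<in> {-1, 1}) \<Longrightarrow> x \<in> D \<longleftrightarrow> reps \<epsilon> x \<in> D"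
  unfolding D_def reps_def using fsym by simp

lemma reps_U: assumes e: "\<forall>j. \<epsilon> j \<in> {-1, 1}" and x: "x \<in> U" shows "reps \<epsilon> x \<in> U"
proof -
  obtain r where r: "0 < r" "ball x r \<subseteq> D" using x unfolding U_def mem_interior by blast
  have "ball (reps \<epsilon> x) r \<subseteq> D"
  proof
    fix z assume "z \<in> ball (reps \<epsilon> x) r"
    then have "dist (reps \<epsilon> x) z < r" by simp
    also have "dist (reps \<epsilon> x) z = dist x (reps \<epsilon> z)"
      using e by (metis dist_norm norm_reps reps_diff reps_reps)
    finally have "reps \<epsilon> z \<in> D" using r by auto
    then show "z \<in> D" using reps_D[OF e] reps_reps[OF e] by metis
  qed
  then show ?thesis unfolding U_def mem_interior using r by blast
qed

lemma g_sym: assumes "\<forall>j. \<epsilon> j \<in> {-1, 1}" shows "g (\<chi> j. \<epsilon> j * x $ j) = g x"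
proof -
  have "reps \<epsilon> x \<in> U \<longleftrightarrow> x \<in> U" using reps_U[OF assms] reps_reps[OF assms] by metis
  then show ?thesis using fsym[OF assms] unfolding g_def reps_def[symmetric] by (simp add: indicator_def reps_def)
qed

lemma AE_fg: "AE x in lebesgue. f x = g x"
proof -
  have "negligible (frontier D)" by (rule negligible_convex_frontier[OF convex_D])
  then have "frontier D \<in> null_sets lebesgue" by (simp add: negligible_iff_null_sets)
  moreover have "{x. f x \<noteq> g x} \<subseteq> frontier D"
  proof
    fix x assume "x \<in> {x. f x \<noteq> g x}"
    then have "x \<notin> U" "f x \<noteq> 0" unfolding g_def by (auto simp: indicator_def)
    then have "x \<in> D" "x \<notin> interior D" using f_nonneg[of x] unfolding D_def U_def by auto
    then show "x \<in> frontier D" unfolding frontier_def using closure_subset by auto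
  qed
  ultimately show ?thesis by (auto intro: AE_I')
qed

lemma density_eq:
  assumes B: "B \<in> sets borel"
  shows "emeasure (density lebesgue (\<lambda>x. ennreal (f x))) B = (\<integral>\<^sup>+x. ennreal (g x) * indicator B x \<partial>lborel)"
proof -
  have [measurable]: "g \<in> borel_measurable borel" by (rule g_borel)
  have Bl: "B \<in> sets lebesgue" using B by simp
  have "emeasure (density lebesgue (\<lambda>x. ennreal (f x))) B = (\<integral>\<^sup>+x. ennreal (f x) * indicator B x \<partial>lebesgue)"
    using Bl fm by (simp add: emeasure_density)
  also have "\<dots> = (\<integral>\<^sup>+x. ennreal (g x) * indicator B x \<partial>lebesgue)"
    using AE_fg by (intro nn_integral_cong_AE) auto
  also have "\<dots> = (\<integral>\<^sup>+x. ennreal (g x) * indicator B x \<partial>lborel)"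
    by (intro nn_integral_completion) measurable
  finally show ?thesis .
qed

end

lemma fiber_interval:
  fixes K :: "(real^'n) set" assumes K: "compact K" "convex K"
  shows "fiber K (axis i 1) y = {} \<or> (\<exists>a b. a \<le> b \<and> fiber K (axis i 1) y = {a..b})"
proof -
  let ?F = "fiber K (axis i 1) y"
  have F: "?F = (\<lambda>t. y + t *\<^sub>R axis i 1) -` K" unfolding fiber_def by auto
  have cl: "closed ?F" unfolding F
    by (rule continuous_closed_vimage[OF compact_imp_closed[OF K(1)]]) (intro continuous_intros)
  obtain B where B: "\<And>x. x \<in> K \<Longrightarrow> norm x \<le> B" using compact_imp_bounded[OF K(1)] bounded_iff by blast
  have "bounded ?F" unfolding bounded_iff
  proof (intro exI ballI)
    fix t assume "t \<in> ?F"
    then have "y + t *\<^sub>R axis i 1 \<in> K" unfolding fiber_def by simp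
    then have "norm (y + t *\<^sub>R axis i 1) \<le> B" by (rule B)
    moreover have "\<bar>t - - (y$i)\<bar> \<le> norm (y + t *\<^sub>R axis i 1)"
      using component_le_norm_cart[of "y + t *\<^sub>R axis i 1" i] by (simp add: axis_nth' add.commute)
    ultimately show "norm t \<le> B + \<bar>y$i\<bar>" by simp
  qed
  then have cp: "compact ?F" using cl by (simp add: compact_eq_bounded_closed)
  have "convex ?F" unfolding convex_alt
  proof (intro ballI allI impI)
    fix s t and v :: real assume s: "s \<in> ?F" and t: "t \<in> ?F" and v: "0 \<le> v \<and> v \<le> 1"
    have "(1 - v) *\<^sub>R (y + s *\<^sub>R axis i 1) + v *\<^sub>R (y + t *\<^sub>R axis i 1) \<in> K"
      using s t v K(2) unfolding fiber_def convex_alt by auto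
    moreover have "(1 - v) *\<^sub>R (y + s *\<^sub>R axis i 1) + v *\<^sub>R (y + t *\<^sub>R axis i 1) = y + ((1 - v) *\<^sub>R s + v *\<^sub>R t) *\<^sub>R axis i 1"
      by (simp add: algebra_simps)
    ultimately show "(1 - v) *\<^sub>R s + v *\<^sub>R t \<in> ?F" unfolding fiber_def by simp
  qed
  then have "connected ?F" by (rule convex_connected)
  then obtain a b where ab: "?F = {a..b}" using cp connected_compact_interval_1 by blast
  then show ?thesis by (cases "a \<le> b") auto
qed

context goodf begin

lemma g_even_i:
  assumes yi: "y $ i = 0"
  shows "g (y + (- t) *\<^sub>R axis i 1) = g (y + t *\<^sub>R axis i 1)"
proof -
  define \<epsilon> where "\<epsilon> j = (if j = i then -1 else 1 :: real)" for j
  have e: "\<forall>j. \<epsilon> j \<in> {-1, 1}" unfolding \<epsilon>_def by auto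
  have "(\<chi> j. \<epsilon> j * (y + t *\<^sub>R axis i 1) $ j) = y + (- t) *\<^sub>R axis i 1"
    using yi by (simp add: vec_eq_iff \<epsilon>_def axis_nth')
  then show ?thesis using g_sym[OF e, of "y + t *\<^sub>R axis i 1"] by simp
qed

lemma g_reflo: "g (reflo i q) = g q"
proof -
  define \<epsilon> where "\<epsilon> j = (if j = i then 1 else -1 :: real)" for j
  have e: "\<forall>j. \<epsilon> j \<in> {-1, 1}" unfolding \<epsilon>_def by auto
  have "(\<chi> j. \<epsilon> j * q $ j) = reflo i q" by (simp add: vec_eq_iff \<epsilon>_def reflo_def)
  then show ?thesis using g_sym[OF e, of q] by simp
qed

lemma g_unimodal:
  assumes yi: "y $ i = 0" and st: "\<bar>s\<bar> \<le> \<bar>t\<bar>"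
  shows "g (y + t *\<^sub>R axis i 1) \<le> g (y + s *\<^sub>R axis i 1)"
proof (cases "t = 0")
  case True then have "s = 0" using st by simp
  then show ?thesis using True by simp
next
  case False
  define l where "l = (t - s) / (2 * t)"
  have l01: "0 \<le> l" "l \<le> 1" unfolding l_def using st False
    by (auto simp: divide_simps abs_if split: if_splits)
  have seq: "(1 - l) * t + l * (- t) = s" unfolding l_def using False by (simp add: field_simps)
  let ?p = "y + t *\<^sub>R axis i 1" and ?q = "y + (- t) *\<^sub>R axis i 1"
  have comb: "(1 - l) *\<^sub>R ?p + l *\<^sub>R ?q = y + s *\<^sub>R axis i 1"
  proof -
    have "(1 - l) *\<^sub>R ?p + l *\<^sub>R ?q = y + ((1 - l) * t + l * (- t)) *\<^sub>R axis i 1"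
      by (simp add: vec_eq_iff axis_nth' algebra_simps)
    then show ?thesis unfolding seq .
  qed
  consider "l = 0" | "l = 1" | "0 < l \<and> l < 1" using l01 by linarith
  then show ?thesis
  proof cases
    case 1 then have "s = t" using seq by simp
    then show ?thesis by simp
  next
    case 2 then have "s = - t" using seq by simp
    then show ?thesis using g_even_i[OF yi, of t] by simp
  next
    case 3
    have "g ?p powr (1 - l) * g ?q powr l \<le> g ((1 - l) *\<^sub>R ?p + l *\<^sub>R ?q)"
      using g_lc 3 unfolding log_concave_fun_def by blast
    moreover have "g ?p powr (1 - l) * g ?q powr l = g ?p"
      using g_even_i[OF yi, of t] g_nonneg[of ?p] by (simp add: powr_add[symmetric])
    ultimately show ?thesis unfolding comb by simp
  qed
qed

lemma g_mid: "g p * g q \<le> g ((1/2) *\<^sub>R (p + q)) ^ 2"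
proof -
  have lc2: "\<And>x y t. 0 < t \<Longrightarrow> t < 1 \<Longrightarrow> g x powr (1 - t) * g y powr t \<le> g ((1 - t) *\<^sub>R x + t *\<^sub>R y)"
    using g_lc unfolding log_concave_fun_def by blast
  have "g p powr (1 - 1/2) * g q powr (1/2) \<le> g ((1 - 1/2) *\<^sub>R p + (1/2) *\<^sub>R q)"
    by (rule lc2) simp_all
  moreover have "(1 - 1/2) *\<^sub>R p + (1/2) *\<^sub>R q = (1/2) *\<^sub>R (p + q)" by (simp add: algebra_simps)
  ultimately have h: "g p powr (1/2) * g q powr (1/2) \<le> g ((1/2) *\<^sub>R (p + q))" by simp
  have a: "x powr (1/2) * x powr (1/2) = x" if "0 \<le> x" for x :: real
  proof -
    have "x powr (1/2) * x powr (1/2) = x powr (1/2 + 1/2)" by (rule powr_add[symmetric])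
    also have "\<dots> = x" using that by simp
    finally show ?thesis .
  qed
  have "(g p powr (1/2) * g q powr (1/2))^2 = (g p powr (1/2) * g p powr (1/2)) * (g q powr (1/2) * g q powr (1/2))"
    by (simp add: power2_eq_square algebra_simps)
  also have "\<dots> = g p * g q" using a[OF g_nonneg[of p]] a[OF g_nonneg[of q]] by simp
  finally have "(g p powr (1/2) * g q powr (1/2))^2 = g p * g q" .
  moreover have "(g p powr (1/2) * g q powr (1/2))^2 \<le> g ((1/2) *\<^sub>R (p + q)) ^ 2"
    using h by (intro power_mono) auto
  ultimately show ?thesis by simp
qed

lemma partA_fiber:
  fixes K :: "(real^'n) set"
  assumes K: "compact K" "convex K" and yi: "y $ i = 0"
  shows "(\<integral>\<^sup>+t. ennreal (g (y + t *\<^sub>R axis i 1)) * indicator K (y + t *\<^sub>R axis i 1) \<partial>lborel)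
       \<le> (\<integral>\<^sup>+t. ennreal (g (y + t *\<^sub>R axis i 1)) * indicator (steiner_symmetral (axis i 1) K) (y + t *\<^sub>R axis i 1) \<partial>lborel)"
proof -
  have indK: "indicator K (y + t *\<^sub>R axis i 1) = (indicator (fiber K (axis i 1) y) t :: ennreal)" for t
    unfolding fiber_def by (simp add: indicator_def)
  consider "fiber K (axis i 1) y = {}" | a b where "a \<le> b" "fiber K (axis i 1) y = {a..b}"
    using fiber_interval[OF K] by blast
  then show ?thesis
  proof cases
    case 1
    then show ?thesis unfolding indK by simp
  next
    case 2
    define c where "c = (b - a)/2"
    define m where "m = (a + b)/2"
    have gm: "(\<lambda>t. g (y + t *\<^sub>R axis i 1)) \<in> borel_measurable borel"
      using g_borel by measurable
    have "(\<integral>\<^sup>+t. ennreal (g (y + t *\<^sub>R axis i 1)) * indicator K (y + t *\<^sub>R axis i 1) \<partial>lborel)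
        = (\<integral>\<^sup>+t. ennreal (g (y + t *\<^sub>R axis i 1)) * indicator {a..b} t \<partial>lborel)"
      unfolding indK 2 ..
    also have "\<dots> \<le> (\<integral>\<^sup>+t. ennreal (g (y + t *\<^sub>R axis i 1)) * indicator {-((b-a)/2)..(b-a)/2} t \<partial>lborel)"
      by (rule fiber_ineq[OF gm g_nonneg g_unimodal[OF yi] 2(1)])
    also have "\<dots> \<le> (\<integral>\<^sup>+t. ennreal (g (y + t *\<^sub>R axis i 1)) * indicator (steiner_symmetral (axis i 1) K) (y + t *\<^sub>R axis i 1) \<partial>lborel)"
    proof (intro nn_integral_mono)
      fix t
      show "ennreal (g (y + t *\<^sub>R axis i 1)) * indicator {-((b-a)/2)..(b-a)/2} t
          \<le> ennreal (g (y + t *\<^sub>R axis i 1)) * indicator (steiner_symmetral (axis i 1) K) (y + t *\<^sub>R axis i 1)"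
      proof (cases "t \<in> {-((b-a)/2)..(b-a)/2}")
        case True
        have h1: "-((b-a)/2) \<le> t" "t \<le> (b-a)/2" using True by auto
        have "a \<le> m + t" unfolding m_def using h1 by (simp add: field_simps)
        moreover have "m + t \<le> b" unfolding m_def using h1 by (simp add: field_simps)
        moreover have "a \<le> m - t" unfolding m_def using h1 by (simp add: field_simps)
        moreover have "m - t \<le> b" unfolding m_def using h1 by (simp add: field_simps)
        ultimately have s: "m + t \<in> fiber K (axis i 1) y" "m - t \<in> fiber K (axis i 1) y"
          unfolding 2 by auto
        have "t = ((m + t) + - (m - t))/2" by simp
        moreover have "- (m - t) \<in> uminus ` fiber K (axis i 1) y" using s(2) by (rule imageI)
        ultimately have "t \<in> {(s + r)/2 | s r. s \<in> fiber K (axis i 1) y \<and> r \<in> uminus ` fiber K (axis i 1) y}"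
          using s by blast
        moreover have "inner y (axis i 1) = 0" using yi by (simp add: inner_axis1)
        ultimately have "y + t *\<^sub>R axis i 1 \<in> steiner_symmetral (axis i 1) K"
          unfolding steiner_symmetral_def by blast
        then show ?thesis using True by simp
      qed simp
    qed
    finally show ?thesis .
  qed
qed

end

lemma closed_polar: "closed (polar (S :: (real^'n) set))"
proof -
  have "polar S = (\<Inter>x\<in>S. {y. inner x y \<le> 1})" unfolding polar_def by auto
  moreover have "closed {y. inner x y \<le> (1::real)}" for x :: "real^'n"
    by (intro closed_Collect_le continuous_intros)
  ultimately show ?thesis by (auto intro: closed_INT)
qed

lemma ennreal_sq_le: "(a::ennreal)^2 \<le> b^2 \<Longrightarrow> a \<le> b"
proof (rule ccontr)
  assume h: "a^2 \<le> b^2" and "\<not> a \<le> b"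
  then have ba: "b < a" by simp
  then obtain b' where b: "b = ennreal b'" "0 \<le> b'" by (cases b rule: ennreal_cases) auto
  show False
  proof (cases a rule: ennreal_cases)
    case (real a')
    then have "b' < a'" using ba b by (simp add: ennreal_less_iff)
    then have "b'^2 < a'^2" using b by (intro power_strict_mono) auto
    moreover have "ennreal (a'^2) \<le> ennreal (b'^2)" using h real b by (simp add: ennreal_power)
    ultimately show False using b by (simp add: ennreal_le_iff)
  next
    case top
    then have "a^2 = top" by (simp add: power2_eq_square)
    moreover have "b^2 \<noteq> top" using b(1) ennreal_power[OF b(2), of 2] by simp
    ultimately show False using h by (simp add: top_unique)
  qed
qed

lemma vec_upd: "vec_lambda (x(i := t)) = vec_lambda (x(i := 0)) + t *\<^sub>R axis i (1::real)"
  by (simp add: vec_eq_iff axis_nth')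

lemma vec_upd_i: "vec_lambda (x(i := t)) $ i = (t::real)"
  by simp

lemma insert_UNIV_i: "insert i (UNIV - {i}) = UNIV" by auto

lemma vec_lambda_measurable': "(vec_lambda :: ('n::finite \<Rightarrow> real) \<Rightarrow> real^'n) \<in> PL (insert i (UNIV - {i})) \<rightarrow>\<^sub>M borel"
  unfolding insert_UNIV_i by (rule vec_lambda_measurable)

context goodf begin

lemma Gm: assumes [measurable]: "B \<in> sets borel" shows "(\<lambda>v. ennreal (g v) * indicator B v) \<in> borel_measurable borel"
  using g_borel by measurable

lemma split_A:
  fixes B :: "(real^'n) set" assumes B[measurable]: "B \<in> sets borel"
  shows "(\<integral>\<^sup>+v. ennreal (g v) * indicator B v \<partial>lborel) =
    (\<integral>\<^sup>+x. (\<integral>\<^sup>+t. ennreal (g (vec_lambda (x(i := t)))) * indicator B (vec_lambda (x(i := t))) \<partial>lborel) \<partial>PL (UNIV - {i}))"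
proof -
  interpret product_sigma_finite "\<lambda>_. lborel :: real measure" by standard
  note [measurable] = g_borel vec_lambda_measurable'[of i]
  have "(\<integral>\<^sup>+v. ennreal (g v) * indicator B v \<partial>lborel) = (\<integral>\<^sup>+x. ennreal (g (vec_lambda x)) * indicator B (vec_lambda x) \<partial>PL UNIV)"
    by (rule nn_integral_vec[OF Gm[OF B]])
  also have "\<dots> = (\<integral>\<^sup>+x. ennreal (g (vec_lambda x)) * indicator B (vec_lambda x) \<partial>PL (insert i (UNIV - {i})))"
    by (simp only: insert_UNIV_i)
  also have "\<dots> = (\<integral>\<^sup>+x. (\<integral>\<^sup>+t. ennreal (g (vec_lambda (x(i := t)))) * indicator B (vec_lambda (x(i := t))) \<partial>lborel) \<partial>PL (UNIV - {i}))"
    by (rule product_nn_integral_insert) auto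
  finally show ?thesis .
qed

lemma split_B:
  fixes B :: "(real^'n) set" assumes B[measurable]: "B \<in> sets borel"
  shows "(\<integral>\<^sup>+v. ennreal (g v) * indicator B v \<partial>lborel) =
    (\<integral>\<^sup>+t. (\<integral>\<^sup>+x. ennreal (g (vec_lambda (x(i := t)))) * indicator B (vec_lambda (x(i := t))) \<partial>PL (UNIV - {i})) \<partial>lborel)"
proof -
  interpret product_sigma_finite "\<lambda>_. lborel :: real measure" by standard
  note [measurable] = g_borel vec_lambda_measurable'[of i]
  have "(\<integral>\<^sup>+v. ennreal (g v) * indicator B v \<partial>lborel) = (\<integral>\<^sup>+x. ennreal (g (vec_lambda x)) * indicator B (vec_lambda x) \<partial>PL UNIV)"
    by (rule nn_integral_vec[OF Gm[OF B]])
  also have "\<dots> = (\<integral>\<^sup>+x. ennreal (g (vec_lambda x)) * indicator B (vec_lambda x) \<partial>PL (insert i (UNIV - {i})))"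
    by (simp only: insert_UNIV_i)
  also have "\<dots> = (\<integral>\<^sup>+t. (\<integral>\<^sup>+x. ennreal (g (vec_lambda (x(i := t)))) * indicator B (vec_lambda (x(i := t))) \<partial>PL (UNIV - {i})) \<partial>lborel)"
    by (rule product_nn_integral_insert_rev) auto
  finally show ?thesis .
qed

lemma partA:
  fixes K :: "(real^'n) set" assumes K: "compact K" "convex K"
  shows "(\<integral>\<^sup>+v. ennreal (g v) * indicator K v \<partial>lborel) \<le>
         (\<integral>\<^sup>+v. ennreal (g v) * indicator (steiner_symmetral (axis i 1) K) v \<partial>lborel)"
proof -
  have b1: "K \<in> sets borel" using K by (auto intro: borel_compact)
  have b2: "steiner_symmetral (axis i 1) K \<in> sets borel" using SK_compact[OF K(1)] by (auto intro: borel_compact)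
  show ?thesis unfolding split_A[where i=i, OF b1] split_A[where i=i, OF b2]
  proof (rule nn_integral_mono)
    fix x :: "'n \<Rightarrow> real"
    define y where "y = (vec_lambda (x(i := 0)) :: real^'n)"
    have yi: "y $ i = 0" unfolding y_def by simp
    have e: "vec_lambda (x(i := t)) = y + t *\<^sub>R axis i 1" for t unfolding y_def by (rule vec_upd)
    show "(\<integral>\<^sup>+t. ennreal (g (vec_lambda (x(i := t)))) * indicator K (vec_lambda (x(i := t))) \<partial>lborel)
       \<le> (\<integral>\<^sup>+t. ennreal (g (vec_lambda (x(i := t)))) * indicator (steiner_symmetral (axis i 1) K) (vec_lambda (x(i := t))) \<partial>lborel)"
      unfolding e by (rule partA_fiber[OF K yi])
  qed
qed

lemma partB_slice:
  fixes K :: "(real^'n) set" assumes sym: "symmetric_set K"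
  shows "(\<integral>\<^sup>+x. ennreal (g (vec_lambda (x(i := \<sigma>)))) * indicator (polar K) (vec_lambda (x(i := \<sigma>))) \<partial>PL (UNIV - {i}))
       \<le> (\<integral>\<^sup>+x. ennreal (g (vec_lambda (x(i := \<sigma>)))) * indicator (polar (steiner_symmetral (axis i 1) K)) (vec_lambda (x(i := \<sigma>))) \<partial>PL (UNIV - {i}))"
proof -
  define J where "J = UNIV - {i}"
  have iJ: "i \<notin> J" and fJ: "finite J" unfolding J_def by auto
  define P where "P = polar K"
  define Q where "Q = polar (steiner_symmetral (axis i 1) K)"
  have [measurable]: "P \<in> sets borel" "Q \<in> sets borel" unfolding P_def Q_def by (auto intro: borel_closed closed_polar)
  note [measurable] = g_borel vec_lambda_measurable'[of i]
  define F where "F x = ennreal (g (vec_lambda (x(i := \<sigma>)))) * indicator P (vec_lambda (x(i := \<sigma>)))" for x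
  define H where "H x = ennreal (g (vec_lambda (x(i := \<sigma>)))) * indicator Q (vec_lambda (x(i := \<sigma>)))" for x
  define G where "G y = F (restrict (\<lambda>j. - y j) J)" for y
  have full: "(\<lambda>x. ennreal (g (vec_lambda x)) * indicator P (vec_lambda x)) \<in> borel_measurable (PL (insert i J))"
    "(\<lambda>x. ennreal (g (vec_lambda x)) * indicator Q (vec_lambda x)) \<in> borel_measurable (PL (insert i J))"
    unfolding J_def by measurable
  have Fm[measurable]: "F \<in> borel_measurable (PL J)" unfolding F_def
    using measurable_compose[OF _ full(1), of "\<lambda>x. x(i := \<sigma>)"] iJ by simp
  have Hm: "H \<in> borel_measurable (PL J)" unfolding H_def
    using measurable_compose[OF _ full(2), of "\<lambda>x. x(i := \<sigma>)"] iJ by simp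
  have Gm: "G \<in> borel_measurable (PL J)" unfolding G_def by measurable
  have key: "F x * G y \<le> H (restrict (\<lambda>j. (x j + y j)/2) J)^2"
    if x: "x \<in> space (PL J)" and y: "y \<in> space (PL J)" for x y
  proof -
    define p where "p = (vec_lambda (x(i := \<sigma>)) :: real^'n)"
    define q where "q = (vec_lambda (y(i := \<sigma>)) :: real^'n)"
    have eG: "vec_lambda ((restrict (\<lambda>j. - y j) J)(i := \<sigma>)) = reflo i q"
      unfolding q_def J_def by (simp add: vec_eq_iff reflo_def)
    have eH: "vec_lambda ((restrict (\<lambda>j. (x j + y j)/2) J)(i := \<sigma>)) = (1/2) *\<^sub>R (p + q)"
      unfolding p_def q_def J_def by (simp add: vec_eq_iff)
    have Fx: "F x = ennreal (g p) * indicator P p" unfolding F_def p_def ..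
    have Gy: "G y = ennreal (g (reflo i q)) * indicator P (reflo i q)" unfolding G_def F_def eG ..
    have Hm': "H (restrict (\<lambda>j. (x j + y j)/2) J) = ennreal (g ((1/2) *\<^sub>R (p + q))) * indicator Q ((1/2) *\<^sub>R (p + q))"
      unfolding H_def eH ..
    show ?thesis
    proof (cases "p \<in> P \<and> reflo i q \<in> P")
      case True
      have pq: "p $ i = q $ i" unfolding p_def q_def by simp
      have inQ: "(1/2) *\<^sub>R (p + q) \<in> Q"
        using polar_mid[OF sym _ _ pq] True unfolding P_def Q_def by blast
      have "F x * G y = ennreal (g p * g q)"
        unfolding Fx Gy g_reflo using True g_nonneg by (simp add: ennreal_mult)
      also have "\<dots> \<le> ennreal (g ((1/2) *\<^sub>R (p + q)) ^ 2)" by (intro ennreal_leI g_mid)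
      also have "\<dots> = H (restrict (\<lambda>j. (x j + y j)/2) J)^2"
        unfolding Hm' using inQ g_nonneg by (simp add: ennreal_power)
      finally show ?thesis .
    next
      case False
      then have z: "F x * G y = 0" unfolding Fx Gy by auto
      show ?thesis unfolding z by simp
    qed
  qed
  have "(\<integral>\<^sup>+x. F x \<partial>PL J) * (\<integral>\<^sup>+x. G x \<partial>PL J) \<le> (\<integral>\<^sup>+x. H x \<partial>PL J)^2"
    by (rule plN[OF fJ Fm Gm Hm key])
  moreover have "(\<integral>\<^sup>+x. G x \<partial>PL J) = (\<integral>\<^sup>+x. F x \<partial>PL J)"
    unfolding G_def by (rule refl_PL[OF fJ Fm])
  ultimately have "(\<integral>\<^sup>+x. F x \<partial>PL J)^2 \<le> (\<integral>\<^sup>+x. H x \<partial>PL J)^2" by (simp add: power2_eq_square)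
  then have "(\<integral>\<^sup>+x. F x \<partial>PL J) \<le> (\<integral>\<^sup>+x. H x \<partial>PL J)" by (rule ennreal_sq_le)
  then show ?thesis unfolding F_def H_def P_def Q_def J_def .
qed

lemma partB:
  fixes K :: "(real^'n) set" assumes sym: "symmetric_set K"
  shows "(\<integral>\<^sup>+v. ennreal (g v) * indicator (polar K) v \<partial>lborel) \<le>
         (\<integral>\<^sup>+v. ennreal (g v) * indicator (polar (steiner_symmetral (axis i 1) K)) v \<partial>lborel)"
proof -
  have b1: "polar K \<in> sets borel" "polar (steiner_symmetral (axis i 1) K) \<in> sets borel"
    by (auto intro: borel_closed closed_polar)
  show ?thesis unfolding split_B[where i=i, OF b1(1)] split_B[where i=i, OF b1(2)]
    by (rule nn_integral_mono) (rule partB_slice[OF sym])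
qed

end

theorem claim1:
  fixes \<mu> :: "(real^'n) measure" and K :: "(real^'n) set" and i :: 'n
  assumes "log_concave_measure \<mu>" and "unconditional_measure \<mu>"
    and "convex_body K" and "symmetric_set K"
  shows "emeasure \<mu> K * emeasure \<mu> (polar K)
         \<le> emeasure \<mu> (steiner_symmetral (axis i 1) K)
           * emeasure \<mu> (polar (steiner_symmetral (axis i 1) K))"
proof -
  obtain f where fm: "f \<in> borel_measurable lebesgue" and lc: "log_concave_fun f"
    and mu: "\<mu> = density lebesgue (\<lambda>x. ennreal (f x))"
    and fs: "\<And>x (\<epsilon>::'n \<Rightarrow> real). (\<forall>j. \<epsilon> j \<in> {-1, 1}) \<longrightarrow> f (\<chi> j. \<epsilon> j * x $ j) = f x"
    using assms(2) unfolding unconditional_measure_def by blast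
  interpret goodf f using fm lc fs by unfold_locales auto
  have K: "compact K" "convex K" using assms(3) unfolding convex_body_def by auto
  have b: "K \<in> sets borel" "polar K \<in> sets borel" "steiner_symmetral (axis i 1) K \<in> sets borel"
     "polar (steiner_symmetral (axis i 1) K) \<in> sets borel"
    using K SK_compact[OF K(1), of i] by (auto intro: borel_compact borel_closed closed_polar)
  have "emeasure \<mu> K \<le> emeasure \<mu> (steiner_symmetral (axis i 1) K)"
    unfolding mu density_eq[OF b(1)] density_eq[OF b(3)] by (rule partA[OF K])
  moreover have "emeasure \<mu> (polar K) \<le> emeasure \<mu> (polar (steiner_symmetral (axis i 1) K))"
    unfolding mu density_eq[OF b(2)] density_eq[OF b(4)] by (rule partB[OF assms(4)])
  ultimately show ?thesis by (intro mult_mono) auto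
qed

end
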